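(* Let $L\subseteq\Sigma^*$ be a regular language. If $\kappa(L)=1$ and $L$ is closed, then $\kappa(L^* )\le 2$. If $\kappa(L)=n\ge 2$, then: 1. if $L$ is prefix-closed, $\kappa(L^* )\le 2^{n-2}+1$; 2. if $L$ is suffix-closed, $\kappa(L^* )\le n$ when $L=L^*$, and $\kappa(L^* )\le n-1$ when $L\ne L^*$; 3. if $L$ is factor-closed or subword-closed, $\kappa(L^* )\le 2$. The bounds are tight over every alphabet with $|\Sigma|\ge 2$. Specifically, for every $n\ge 2$: - there is a prefix-closed $L$ with $\kappa(L)=n$ and $\kappa(L^* )=2^{n-2}+1$; - there is a subword-closed $L$ with $\kappa(L)=n$ and $\kappa(L^* )=2$. For every $n\ge 3$: - there is a suffix-closed $L$ with $\kappa(L)=n$, $L=L^*$ and $\kappa(L^* )=n$; - there is a suffix-closed $L$ with $\kappa(L)=n$, $L\ne L^*$ and $\kappa(L^* )=n-1$.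
   Context: $\Sigma$ is a finite non-empty alphabet. $L_w=\{x\mid wx\in L\}$ is the left quotient of $L$ by $w$, and $\kappa(L)$ is the number of distinct quotients of $L$ (its state complexity). $L^*=\bigcup_{i\ge0}L^i$ is Kleene star. A language is prefix-closed (suffix-, factor-, subword-closed) if it contains every prefix (suffix, factor, subword) of each of its words, where subword means scattered subsequence. "Closed" means any of these four. *)

theory Defs
  imports Main "HOL-Library.Sublist"
begin

text \<open>Words over the alphabet Sigma = UNIV of a finite type 'a are lists; languages are sets of lists.\<close>

definition conc :: "'a list set \<Rightarrow> 'a list set \<Rightarrow> 'a list set" where
  "conc A B = {u @ v | u v. u \<in> A \<and> v \<in> B}"

fun lpow :: "'a list set \<Rightarrow> nat \<Rightarrow> 'a list set" where
  "lpow L 0 = {[]}"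
| "lpow L (Suc i) = conc L (lpow L i)"

definition kstar :: "'a list set \<Rightarrow> 'a list set" where
  "kstar L = (\<Union>i. lpow L i)"

inductive regular :: "'a list set \<Rightarrow> bool" where
  reg_empty: "regular {}"
| reg_eps: "regular {[]}"
| reg_letter: "regular {[a]}"
| reg_union: "regular A \<Longrightarrow> regular B \<Longrightarrow> regular (A \<union> B)"
| reg_conc: "regular A \<Longrightarrow> regular B \<Longrightarrow> regular (conc A B)"
| reg_star: "regular A \<Longrightarrow> regular (kstar A)"

definition lquot :: "'a list set \<Rightarrow> 'a list \<Rightarrow> 'a list set" where
  "lquot L w = {x. w @ x \<in> L}"

definition kappa :: "'a list set \<Rightarrow> nat" where
  "kappa L = card {lquot L w | w. True}"

definition prefix_closed :: "'a list set \<Rightarrow> bool" where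
  "prefix_closed L \<longleftrightarrow> (\<forall>w\<in>L. \<forall>u. prefix u w \<longrightarrow> u \<in> L)"

definition suffix_closed :: "'a list set \<Rightarrow> bool" where
  "suffix_closed L \<longleftrightarrow> (\<forall>w\<in>L. \<forall>u. suffix u w \<longrightarrow> u \<in> L)"

definition factor_closed :: "'a list set \<Rightarrow> bool" where
  "factor_closed L \<longleftrightarrow> (\<forall>w\<in>L. \<forall>u. sublist u w \<longrightarrow> u \<in> L)"

definition subword_closed :: "'a list set \<Rightarrow> bool" where
  "subword_closed L \<longleftrightarrow> (\<forall>w\<in>L. \<forall>u. subseq u w \<longrightarrow> u \<in> L)"

definition closed_lang :: "'a list set \<Rightarrow> bool" where
  "closed_lang L \<longleftrightarrow> prefix_closed L \<or> suffix_closed L \<or> factor_closed L \<or> subword_closed L"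

end

theory Submission
  imports Defs
begin

lemma conc_iff: "x \<in> conc A B \<longleftrightarrow> (\<exists>u v. x = u @ v \<and> u \<in> A \<and> v \<in> B)"
  unfolding conc_def by blast

lemma kstar_iff: "x \<in> kstar L \<longleftrightarrow> (\<exists>i. x \<in> lpow L i)"
  unfolding kstar_def by blast

lemma kstar_nil[simp]: "[] \<in> kstar L"
  unfolding kstar_iff by (rule exI[of _ 0]) simp

lemma kstar_cons: "u \<in> L \<Longrightarrow> v \<in> kstar L \<Longrightarrow> u @ v \<in> kstar L"
proof -
  assume "u \<in> L" "v \<in> kstar L"
  then obtain i where "v \<in> lpow L i" by (auto simp: kstar_iff)
  then have "u @ v \<in> lpow L (Suc i)" using \<open>u \<in> L\<close> by (auto simp: conc_iff)
  then show ?thesis unfolding kstar_iff by blast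
qed

lemma L_sub_kstar: "u \<in> L \<Longrightarrow> u \<in> kstar L"
  using kstar_cons[of u L "[]"] by simp

lemma kstar_induct[consumes 1, case_names Nil App]:
  assumes "x \<in> kstar L" "P []" "\<And>u v. u \<in> L \<Longrightarrow> v \<in> kstar L \<Longrightarrow> P v \<Longrightarrow> P (u @ v)"
  shows "P x"
proof -
  from assms(1) obtain i where "x \<in> lpow L i" by (auto simp: kstar_iff)
  then show ?thesis
  proof (induction i arbitrary: x)
    case 0 then show ?case using assms(2) by simp
  next
    case (Suc i)
    then obtain u v where "x = u @ v" "u \<in> L" "v \<in> lpow L i" by (auto simp: conc_iff)
    moreover have "v \<in> kstar L" using \<open>v \<in> lpow L i\<close> by (auto simp: kstar_iff)
    ultimately show ?case using Suc assms(3) by blast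
  qed
qed

lemma kstar_app: "u \<in> kstar L \<Longrightarrow> v \<in> kstar L \<Longrightarrow> u @ v \<in> kstar L"
  by (induction u rule: kstar_induct) (auto intro: kstar_cons)

lemma kstar_closed_eq:
  assumes "[] \<in> L" "\<And>u v. u \<in> L \<Longrightarrow> v \<in> L \<Longrightarrow> u @ v \<in> L"
  shows "kstar L = L"
proof
  show "kstar L \<subseteq> L"
  proof
    fix x assume "x \<in> kstar L" then show "x \<in> L"
      by (induction x rule: kstar_induct) (use assms in auto)
  qed
qed (auto intro: L_sub_kstar)

lemma kstar_mono: "A \<subseteq> B \<Longrightarrow> kstar A \<subseteq> kstar B"
proof
  fix x assume AB: "A \<subseteq> B" and xA: "x \<in> kstar A" show "x \<in> kstar B"
    using xA by (induction x rule: kstar_induct) (use AB in \<open>auto intro: kstar_cons\<close>)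
qed

lemma conc_L_kstar: "conc L (kstar L) \<subseteq> kstar L"
  by (auto simp: conc_iff intro: kstar_cons)

lemma kstar_single: "[c] \<in> kstar L \<Longrightarrow> [c] \<in> L"
proof -
  have "x \<in> kstar L \<Longrightarrow> x = [c] \<longrightarrow> x \<in> L" for x
    by (induction x rule: kstar_induct) (auto simp: append_eq_Cons_conv)
  then show "[c] \<in> kstar L \<Longrightarrow> [c] \<in> L" by blast
qed

lemma lquot_iff[simp]: "x \<in> lquot L w \<longleftrightarrow> w @ x \<in> L"
  by (simp add: lquot_def)

lemma star_split:
  assumes "[] \<in> L" "s \<in> kstar L"
  shows "s = w @ x \<Longrightarrow> \<exists>u v y z. w = u @ v \<and> u \<in> kstar L \<and> x = y @ z \<and> v @ y \<in> L \<and> z \<in> kstar L"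
  using assms(2)
proof (induction s arbitrary: w x rule: kstar_induct)
  case Nil
  then show ?case using assms(1) by (intro exI[of _ "[]"]) auto
next
  case (App a b)
  show ?case
  proof (cases "length w \<le> length a")
    case True
    with App.prems obtain y where "a = w @ y" "x = y @ b"
      by (metis append_eq_append_conv_if append_take_drop_id)
    then show ?thesis using App by (intro exI[of _ "[]"] exI[of _ w] exI[of _ y] exI[of _ b]) auto
  next
    case False
    with App.prems obtain w' where "w = a @ w'" "b = w' @ x"
      by (metis append_eq_append_conv_if append_take_drop_id nat_le_linear)
    with App.IH[of w' x] obtain u v y z where "w' = u @ v" "u \<in> kstar L" "x = y @ z" "v @ y \<in> L" "z \<in> kstar L"
      by blast
    then show ?thesis using \<open>w = a @ w'\<close> App.hyps
      by (intro exI[of _ "a @ u"] exI[of _ v] exI[of _ y] exI[of _ z]) (auto intro: kstar_cons)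
  qed
qed

definition Dset :: "'a list set \<Rightarrow> 'a list \<Rightarrow> 'a list set" where
  "Dset L w = {v. \<exists>u. w = u @ v \<and> u \<in> kstar L}"

lemma quot_star:
  assumes "[] \<in> L"
  shows "lquot (kstar L) w = (\<Union>v\<in>Dset L w. conc (lquot L v) (kstar L))"
proof
  show "lquot (kstar L) w \<subseteq> (\<Union>v\<in>Dset L w. conc (lquot L v) (kstar L))"
  proof
    fix x assume "x \<in> lquot (kstar L) w"
    then obtain u v y z where "w = u @ v" "u \<in> kstar L" "x = y @ z" "v @ y \<in> L" "z \<in> kstar L"
      using star_split[OF assms, of "w @ x" w x] by auto
    then show "x \<in> (\<Union>v\<in>Dset L w. conc (lquot L v) (kstar L))"
      by (auto simp: Dset_def conc_iff)
  qed
next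
  show "(\<Union>v\<in>Dset L w. conc (lquot L v) (kstar L)) \<subseteq> lquot (kstar L) w"
  proof
    fix x assume "x \<in> (\<Union>v\<in>Dset L w. conc (lquot L v) (kstar L))"
    then obtain u v y z where "w = u @ v" "u \<in> kstar L" "x = y @ z" "v @ y \<in> L" "z \<in> kstar L"
      by (auto simp: Dset_def conc_iff)
    then have "w @ x = u @ ((v @ y) @ z)" by simp
    then show "x \<in> lquot (kstar L) w"
      using \<open>u \<in> kstar L\<close> \<open>v @ y \<in> L\<close> \<open>z \<in> kstar L\<close>
      by (metis kstar_app kstar_cons lquot_iff append.assoc)
  qed
qed

lemma kappa_le_image:
  assumes "{lquot K w | w. True} \<subseteq> f ` A" "finite A"
  shows "kappa K \<le> card A"
proof -
  have "kappa K \<le> card (f ` A)" unfolding kappa_def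
    using assms by (intro card_mono) auto
  also have "\<dots> \<le> card A" by (rule card_image_le[OF assms(2)])
  finally show ?thesis .
qed

lemma Q_finite: "kappa L = n \<Longrightarrow> n \<ge> 1 \<Longrightarrow> finite {lquot L w | w. True}"
  unfolding kappa_def using card.infinite by fastforce

lemma L_in_Q: "L \<in> {lquot L w | w. True}"
  by (auto intro!: exI[of _ "[]"] simp: lquot_def)

lemma kappa_one_cases:
  assumes "kappa L = 1"
  shows "\<forall>w. lquot L w = L"
proof -
  obtain K where K: "{lquot L w | w. True} = {K}"
    using assms unfolding kappa_def by (meson card_1_singletonE)
  then have "L = K" using L_in_Q[of L] by auto
  with K show ?thesis by auto
qed

lemma factor_bound:
  assumes "factor_closed L"
  shows "kappa (kstar L) \<le> 2"
proof -
  define B where "B = {c. [c] \<in> L}"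
  have 1: "set x \<subseteq> B" if "x \<in> L" for x
  proof
    fix c assume "c \<in> set x"
    then obtain p s where "x = p @ c # s" by (meson split_list)
    then have "sublist [c] x" by (auto simp: sublist_def)
    then show "c \<in> B" using assms that unfolding factor_closed_def B_def by blast
  qed
  have eq: "kstar L = {x. set x \<subseteq> B}"
  proof
    show "kstar L \<subseteq> {x. set x \<subseteq> B}"
    proof
      fix x assume "x \<in> kstar L" then show "x \<in> {x. set x \<subseteq> B}"
        by (induction x rule: kstar_induct) (auto dest: 1)
    qed
  next
    show "{x. set x \<subseteq> B} \<subseteq> kstar L"
    proof
      fix x assume "x \<in> {x. set x \<subseteq> B}" then show "x \<in> kstar L"
      proof (induction x)
        case (Cons c x)
        then have "[c] \<in> L" "x \<in> kstar L" by (auto simp: B_def)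
        then show ?case using kstar_cons[of "[c]" L x] by simp
      qed simp
    qed
  qed
  have "{lquot (kstar L) w | w. True} \<subseteq> (\<lambda>b. if b then {x. set x \<subseteq> B} else {}) ` UNIV"
  proof
    fix K assume "K \<in> {lquot (kstar L) w | w. True}"
    then obtain w where "K = lquot (kstar L) w" by auto
    have "K = (if set w \<subseteq> B then {x. set x \<subseteq> B} else {})"
    proof (rule set_eqI)
      fix x show "x \<in> K \<longleftrightarrow> x \<in> (if set w \<subseteq> B then {x. set x \<subseteq> B} else {})"
        unfolding \<open>K = lquot (kstar L) w\<close> lquot_iff eq by simp
    qed
    then show "K \<in> (\<lambda>b. if b then {x. set x \<subseteq> B} else {}) ` UNIV" by auto
  qed
  from kappa_le_image[OF this] show ?thesis by simp
qed

lemma subword_factor: "subword_closed L \<Longrightarrow> factor_closed L"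
  unfolding subword_closed_def factor_closed_def by (meson sublist_imp_subseq)

lemma kappa1_bound:
  assumes "kappa L = 1" "closed_lang L"
  shows "kappa (kstar L) \<le> 2"
proof -
  have q: "\<forall>w. lquot L w = L" by (rule kappa_one_cases[OF assms(1)])
  have "L = UNIV \<or> L = {}"
  proof (cases "[] \<in> L")
    case True
    have "w \<in> L" for w
    proof -
      have "[] \<in> lquot L w" using q True by simp
      then show ?thesis by (simp add: lquot_def)
    qed
    then show ?thesis by auto
  next
    case False
    have "w \<notin> L" for w
    proof
      assume "w \<in> L"
      have "prefix [] w" "suffix [] w" "sublist [] w" "subseq [] w" by auto
      then show False using assms(2) \<open>w \<in> L\<close> False
        unfolding closed_lang_def prefix_closed_def suffix_closed_def factor_closed_def subword_closed_def
        by metis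
    qed
    then show ?thesis by auto
  qed
  then have "factor_closed L" unfolding factor_closed_def by auto
  then show ?thesis by (rule factor_bound)
qed

lemma nil_in_L:
  assumes "kappa L = n" "n \<ge> 2" "\<forall>w\<in>L. [] \<in> L"
  shows "[] \<in> L"
proof (rule ccontr)
  assume "[] \<notin> L"
  then have "L = {}" using assms(3) by auto
  then have "{lquot L w | w. True} = {{}}" by (auto simp: lquot_def)
  then show False using assms by (simp add: kappa_def)
qed

lemma prefix_bound:
  assumes pc: "prefix_closed L" and kn: "kappa L = n" and n2: "n \<ge> 2"
  shows "kappa (kstar L) \<le> 2 ^ (n - 2) + 1"
proof -
  define Q where "Q = {lquot L w | w. True}"
  have finQ: "finite Q" using Q_finite[OF kn] n2 unfolding Q_def by auto
  have cQ: "card Q = n" using kn unfolding kappa_def Q_def .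
  have eL: "[] \<in> L"
    using nil_in_L[OF kn n2] pc unfolding prefix_closed_def by auto
  have LQ: "L \<in> Q" unfolding Q_def by (rule L_in_Q)
  have dead: "lquot L v = {}" if "v \<notin> L" for v
    using pc that unfolding prefix_closed_def by (auto simp: lquot_def)
  have eQ: "{} \<in> Q"
  proof (rule ccontr)
    assume "{} \<notin> Q"
    then have "v \<in> L" for v using dead[of v] unfolding Q_def by auto
    then have "lquot L w = UNIV" for w by (auto simp: lquot_def)
    then have "Q = {UNIV}" unfolding Q_def by auto
    then show False using cQ n2 by simp
  qed
  have LnE: "L \<noteq> {}" using eL by auto
  define f where "f U = (\<Union>K\<in>U. conc K (kstar L))" for U
  define A where "A = insert L ` Pow (Q - {{}, L})"
  have fA: "finite A" unfolding A_def using finQ by simp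
  have cA: "card A \<le> 2 ^ (n - 2)"
  proof -
    have "card A \<le> card (Pow (Q - {{}, L}))" unfolding A_def
      using finQ by (intro card_image_le) simp
    also have "\<dots> = 2 ^ card (Q - {{}, L})" using finQ by (simp add: card_Pow)
    also have "card (Q - {{}, L}) = n - 2" using cQ eQ LQ LnE finQ
      by (simp add: card_Diff_subset)
    finally show ?thesis .
  qed
  have sub: "{lquot (kstar L) w | w. True} \<subseteq> (\<lambda>o'. case o' of None \<Rightarrow> {} | Some U \<Rightarrow> f U) ` (insert None (Some ` A))"
  proof
    fix K assume "K \<in> {lquot (kstar L) w | w. True}"
    then obtain w where Kw: "K = lquot (kstar L) w" by auto
    define U0 where "U0 = lquot L ` Dset L w"
    have KU: "K = f U0" unfolding Kw quot_star[OF eL] f_def U0_def by auto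
    have U0Q: "U0 \<subseteq> Q" unfolding U0_def Q_def by auto
    show "K \<in> (\<lambda>o'. case o' of None \<Rightarrow> {} | Some U \<Rightarrow> f U) ` (insert None (Some ` A))"
    proof (cases "U0 \<subseteq> {{}}")
      case True
      then have "K = {}" unfolding KU f_def by (auto simp: conc_def)
      then show ?thesis by (intro image_eqI[of _ _ None]) auto
    next
      case False
      then obtain K1 where K1: "K1 \<in> U0" "K1 \<noteq> {}" by auto
      then obtain v where v: "K1 = lquot L v" unfolding U0_def by auto
      have "v \<in> L" using dead[of v] K1 v by auto
      then have "[] \<in> K1" using v by (simp add: lquot_def)
      then have "kstar L \<subseteq> conc K1 (kstar L)" by (force simp: conc_def)
      then have "kstar L \<subseteq> f U0" unfolding f_def using K1 by blast
      moreover have "conc L (kstar L) \<subseteq> kstar L" by (rule conc_L_kstar)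
      ultimately have fL: "conc L (kstar L) \<subseteq> f U0" by blast
      have ce: "conc {} (kstar L) = {}" by (simp add: conc_def)
      have "f U0 = f (insert L (U0 - {{}, L}))"
      proof
        show "f U0 \<subseteq> f (insert L (U0 - {{}, L}))"
        proof
          fix x assume "x \<in> f U0"
          then obtain K where "K \<in> U0" "x \<in> conc K (kstar L)" unfolding f_def by blast
          then show "x \<in> f (insert L (U0 - {{}, L}))" unfolding f_def
            using ce by (cases "K = {} \<or> K = L") auto
        qed
      next
        show "f (insert L (U0 - {{}, L})) \<subseteq> f U0"
          using fL unfolding f_def by blast
      qed
      moreover have "insert L (U0 - {{}, L}) \<in> A" unfolding A_def using U0Q by auto
      ultimately show ?thesis unfolding KU by (intro image_eqI[of _ _ "Some (insert L (U0 - {{}, L}))"]) auto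
    qed
  qed
  have "kappa (kstar L) \<le> card (insert None (Some ` A))"
    by (rule kappa_le_image[OF sub]) (simp add: fA)
  also have "\<dots> \<le> card A + 1" using fA by (simp add: card_image)
  finally show ?thesis using cA by simp
qed

lemma suffix_bound:
  assumes sc: "suffix_closed L" and kn: "kappa L = n" and n2: "n \<ge> 2"
  shows "kappa (kstar L) \<le> n \<and> (L \<noteq> kstar L \<longrightarrow> kappa (kstar L) \<le> n - 1)"
proof -
  define Q where "Q = {lquot L w | w. True}"
  have finQ: "finite Q" using Q_finite[OF kn] n2 unfolding Q_def by auto
  have cQ: "card Q = n" using kn unfolding kappa_def Q_def .
  have eL: "[] \<in> L"
    using nil_in_L[OF kn n2] sc unfolding suffix_closed_def by auto
  have LQ: "L \<in> Q" unfolding Q_def by (rule L_in_Q)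
  define g where "g K = conc K (kstar L)" for K
  have key: "lquot (kstar L) w \<in> g ` Q" for w
  proof -
    have "w \<in> Dset L w" unfolding Dset_def by (intro CollectI exI[of _ "[]"]) simp
    then obtain v0 where v0: "v0 \<in> Dset L w" "\<forall>v. v \<in> Dset L w \<longrightarrow> length v0 \<le> length v"
      using ex_has_least_nat[of "\<lambda>v. v \<in> Dset L w" w length] by blast
    have sub: "lquot L v \<subseteq> lquot L v0" if "v \<in> Dset L w" for v
    proof
      fix x assume x: "x \<in> lquot L v"
      have a1: "suffix v w" using that unfolding Dset_def suffix_def by blast
      have a2: "suffix v0 w" using v0(1) unfolding Dset_def suffix_def by blast
      have "suffix v0 v" using suffix_length_suffix[OF a2 a1] v0(2) that by blast
      then obtain p where "v = p @ v0" unfolding suffix_def by auto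
      then have "suffix (v0 @ x) (v @ x)" unfolding suffix_def by auto
      then show "x \<in> lquot L v0" using x sc unfolding suffix_closed_def by auto
    qed
    have "lquot (kstar L) w = g (lquot L v0)"
    proof
      show "lquot (kstar L) w \<subseteq> g (lquot L v0)"
      proof
        fix x assume "x \<in> lquot (kstar L) w"
        then obtain v where "v \<in> Dset L w" "x \<in> conc (lquot L v) (kstar L)"
          unfolding quot_star[OF eL] by blast
        then obtain y z where "x = y @ z" "y \<in> lquot L v" "z \<in> kstar L"
          unfolding conc_iff by blast
        then show "x \<in> g (lquot L v0)" unfolding g_def conc_iff
          using sub[OF \<open>v \<in> Dset L w\<close>] by blast
      qed
      show "g (lquot L v0) \<subseteq> lquot (kstar L) w"
        unfolding quot_star[OF eL] g_def using v0(1) by blast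
    qed
    moreover have "lquot L v0 \<in> Q" unfolding Q_def by blast
    ultimately show ?thesis by (rule image_eqI)
  qed
  have 1: "kappa (kstar L) \<le> n"
  proof -
    have "{lquot (kstar L) w | w. True} \<subseteq> g ` Q"
    proof
      fix K assume "K \<in> {lquot (kstar L) w | w. True}"
      then obtain w where "K = lquot (kstar L) w" by blast
      then show "K \<in> g ` Q" using key[of w] by blast
    qed
    from kappa_le_image[OF this finQ] show ?thesis using cQ by simp
  qed
  have 2: "kappa (kstar L) \<le> n - 1" if ne: "L \<noteq> kstar L"
  proof -
    obtain v where v: "v \<in> L" "lquot L v \<noteq> L"
    proof (rule ccontr)
      assume "\<not> thesis"
      then have "\<forall>v\<in>L. lquot L v = L" using that by blast
      then have "u @ x \<in> L" if "u \<in> L" "x \<in> L" for u x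
      proof -
        have "x \<in> lquot L u" using that \<open>\<forall>v\<in>L. lquot L v = L\<close> by simp
        then show ?thesis by simp
      qed
      then have "kstar L = L" using kstar_closed_eq[OF eL] by blast
      then show False using ne by simp
    qed
    define K1 where "K1 = lquot L v"
    have "[] \<in> K1" using v by (simp add: K1_def)
    have "K1 \<subseteq> L"
    proof
      fix x assume "x \<in> K1"
      then have "v @ x \<in> L" by (simp add: K1_def)
      moreover have "suffix x (v @ x)" by (simp add: suffix_def)
      ultimately show "x \<in> L" using sc unfolding suffix_closed_def by blast
    qed
    have gK: "g K = kstar L" if "[] \<in> K" "K \<subseteq> L" for K
    proof
      show "g K \<subseteq> kstar L"
      proof
        fix x assume "x \<in> g K"
        then obtain u v where "x = u @ v" "u \<in> K" "v \<in> kstar L" unfolding g_def conc_iff by blast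
        then show "x \<in> kstar L" using kstar_cons[of u L v] that(2) by blast
      qed
      show "kstar L \<subseteq> g K"
      proof
        fix x assume "x \<in> kstar L"
        have "[] @ x \<in> conc K (kstar L)" unfolding conc_iff
          by (rule exI[of _ "[]"], rule exI[of _ x]) (simp add: that(1) \<open>x \<in> kstar L\<close>)
        then show "x \<in> g K" unfolding g_def by simp
      qed
    qed
    have K1Q: "K1 \<in> Q - {L}" unfolding Q_def K1_def using v by auto
    have "g L = g K1" using gK[of L] gK[OF \<open>[] \<in> K1\<close> \<open>K1 \<subseteq> L\<close>] eL by simp
    have "g ` Q \<subseteq> g ` (Q - {L})"
    proof
      fix y assume "y \<in> g ` Q"
      then obtain K where "K \<in> Q" "y = g K" by blast
      show "y \<in> g ` (Q - {L})"
      proof (cases "K = L")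
        case True
        then show ?thesis using \<open>y = g K\<close> \<open>g L = g K1\<close> K1Q by blast
      next
        case False
        then show ?thesis using \<open>y = g K\<close> \<open>K \<in> Q\<close> by blast
      qed
    qed
    then have "{lquot (kstar L) w | w. True} \<subseteq> g ` (Q - {L})"
    proof -
      assume gs: "g ` Q \<subseteq> g ` (Q - {L})"
      show ?thesis
      proof
        fix K assume "K \<in> {lquot (kstar L) w | w. True}"
        then obtain w where "K = lquot (kstar L) w" by blast
        then show "K \<in> g ` (Q - {L})" using key[of w] gs by blast
      qed
    qed
    then have "kappa (kstar L) \<le> card (Q - {L})"
      by (rule kappa_le_image) (simp add: finQ)
    then show ?thesis using cQ LQ finQ by simp
  qed
  show ?thesis using 1 2 by blast
qed

lemma concI: "u \<in> A \<Longrightarrow> v \<in> B \<Longrightarrow> u @ v \<in> conc A B"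
  unfolding conc_def by blast

lemma regular_single: "regular {w}"
proof (induction w)
  case Nil then show ?case by (rule reg_eps)
next
  case (Cons c w)
  have "{c # w} = conc {[c]} {w}" by (auto simp: conc_def)
  then show ?case using reg_conc[OF reg_letter Cons] by simp
qed

lemma regular_finite: "finite A \<Longrightarrow> regular A"
proof (induction A rule: finite_induct)
  case empty then show ?case by (rule reg_empty)
next
  case (insert w A)
  have "insert w A = {w} \<union> A" by auto
  then show ?case using reg_union[OF regular_single insert.IH] by simp
qed

lemma regular_UN: "finite I \<Longrightarrow> (\<And>i. i \<in> I \<Longrightarrow> regular (f i)) \<Longrightarrow> regular (\<Union>i\<in>I. f i)"
proof (induction I rule: finite_induct)
  case empty then show ?case by (simp add: reg_empty)
next
  case (insert i I)
  have "(\<Union>j\<in>insert i I. f j) = f i \<union> (\<Union>j\<in>I. f j)" by auto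
  moreover have "regular (f i)" using insert.prems by simp
  moreover have "regular (\<Union>j\<in>I. f j)" using insert.IH insert.prems by simp
  ultimately show ?case using reg_union by simp
qed

definition M :: "('q \<Rightarrow> 'a \<Rightarrow> 'q) \<Rightarrow> 'q set \<Rightarrow> 'q \<Rightarrow> 'q \<Rightarrow> 'a list set" where
  "M \<delta> X p q = {w. foldl \<delta> p w = q \<and> (\<forall>k. 0 < k \<and> k < length w \<longrightarrow> foldl \<delta> p (take k w) \<in> X)}"

lemma M_mono: "X \<subseteq> Y \<Longrightarrow> M \<delta> X p q \<subseteq> M \<delta> Y p q"
  unfolding M_def by blast

lemma M_app:
  assumes u: "u \<in> M \<delta> Y p r" and v: "v \<in> M \<delta> Y r q" and r: "r \<in> Y"
  shows "u @ v \<in> M \<delta> Y p q"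
  unfolding M_def
proof (intro CollectI conjI allI impI)
  show "foldl \<delta> p (u @ v) = q" using u v by (simp add: M_def)
  fix k assume k: "0 < k \<and> k < length (u @ v)"
  show "foldl \<delta> p (take k (u @ v)) \<in> Y"
  proof (cases "k < length u")
    case True
    then show ?thesis using u k by (simp add: M_def)
  next
    case False
    then have e: "take k (u @ v) = u @ take (k - length u) v" by simp
    show ?thesis
    proof (cases "k = length u")
      case True
      then show ?thesis using u r by (simp add: M_def)
    next
      case False
      then have "0 < k - length u" "k - length u < length v" using \<open>\<not> k < length u\<close> k by auto
      then have "foldl \<delta> r (take (k - length u) v) \<in> Y" using v by (simp add: M_def)
      then show ?thesis using e u by (simp add: M_def)
    qed
  qed
qed

lemma split_first:
  assumes w: "w \<in> M \<delta> (insert s X) p q" and nw: "w \<notin> M \<delta> X p q"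
  shows "\<exists>u v. w = u @ v \<and> u \<noteq> [] \<and> u \<in> M \<delta> X p s \<and> v \<in> M \<delta> (insert s X) s q"
proof -
  have fw: "foldl \<delta> p w = q" using w by (simp add: M_def)
  obtain k0 where k0: "0 < k0 \<and> k0 < length w \<and> foldl \<delta> p (take k0 w) \<notin> X"
    using w nw fw unfolding M_def by blast
  define P where "P k = (0 < k \<and> k < length w \<and> foldl \<delta> p (take k w) = s)" for k
  have "P k0" using k0 w unfolding P_def M_def by auto
  then obtain k where Pk: "P k" and kmin: "\<forall>k'. P k' \<longrightarrow> k \<le> k'"
    using ex_has_least_nat[of P k0 "\<lambda>x. x"] by blast
  define u where "u = take k w"
  define v where "v = drop k w"
  have wuv: "w = u @ v" unfolding u_def v_def by simp
  have lu: "length u = k" using Pk unfolding u_def P_def by simp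
  have fu: "foldl \<delta> p u = s" using Pk unfolding u_def P_def by simp
  have uM: "u \<in> M \<delta> X p s"
    unfolding M_def
  proof (intro CollectI conjI allI impI)
    show "foldl \<delta> p u = s" by (rule fu)
    fix k' assume k': "0 < k' \<and> k' < length u"
    then have tk: "take k' u = take k' w" unfolding u_def by simp
    have "foldl \<delta> p (take k' w) \<in> insert s X" using w k' lu Pk unfolding M_def P_def by auto
    moreover have "\<not> P k'" using kmin k' lu by auto
    ultimately show "foldl \<delta> p (take k' u) \<in> X" using tk k' lu Pk unfolding P_def by auto
  qed
  have vM: "v \<in> M \<delta> (insert s X) s q"
    unfolding M_def
  proof (intro CollectI conjI allI impI)
    show "foldl \<delta> s v = q" using fw fu wuv by simp
    fix k' assume k': "0 < k' \<and> k' < length v"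
    have tw: "take (k + k') w = u @ take k' v" using wuv lu by simp
    have "0 < k + k' \<and> k + k' < length w" using k' lu wuv by auto
    then have "foldl \<delta> p (take (k + k') w) \<in> insert s X" using w unfolding M_def by blast
    then have "foldl \<delta> p (u @ take k' v) \<in> insert s X" unfolding tw .
    then show "foldl \<delta> s (take k' v) \<in> insert s X" using fu by simp
  qed
  have "u \<noteq> []" using lu Pk unfolding P_def by auto
  then show ?thesis using wuv uM vM by blast
qed

lemma M_loop:
  assumes "v \<in> M \<delta> (insert s X) s q"
  shows "v \<in> conc (kstar (M \<delta> X s s)) (M \<delta> X s q)"
  using assms
proof (induction "length v" arbitrary: v rule: less_induct)
  case less
  show ?case
  proof (cases "v \<in> M \<delta> X s q")
    case True
    then have "[] @ v \<in> conc (kstar (M \<delta> X s s)) (M \<delta> X s q)"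
      by (intro concI) simp_all
    then show ?thesis by simp
  next
    case False
    then obtain u v' where uv: "v = u @ v'" "u \<noteq> []" "u \<in> M \<delta> X s s" "v' \<in> M \<delta> (insert s X) s q"
      using split_first[OF less.prems] by blast
    then have "length v' < length v" by simp
    then have "v' \<in> conc (kstar (M \<delta> X s s)) (M \<delta> X s q)" using less.hyps uv(4) by blast
    then obtain y z where yz: "v' = y @ z" "y \<in> kstar (M \<delta> X s s)" "z \<in> M \<delta> X s q"
      unfolding conc_iff by blast
    have "u @ y \<in> kstar (M \<delta> X s s)" using kstar_cons[OF uv(3) yz(2)] .
    then have "(u @ y) @ z \<in> conc (kstar (M \<delta> X s s)) (M \<delta> X s q)"
      unfolding conc_iff using yz(3) by blast
    then show ?thesis using uv(1) yz(1) by simp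
  qed
qed

lemma kstar_M: "x \<in> kstar (M \<delta> X s s) \<Longrightarrow> x \<in> M \<delta> (insert s X) s s"
proof (induction x rule: kstar_induct)
  case Nil
  then show ?case by (simp add: M_def)
next
  case (App u v)
  have "u \<in> M \<delta> (insert s X) s s" using App.hyps(1) M_mono[of X "insert s X"] by blast
  then show ?case using M_app[OF _ App.IH] by blast
qed

lemma M_insert:
  "M \<delta> (insert s X) p q = M \<delta> X p q \<union> conc (M \<delta> X p s) (conc (kstar (M \<delta> X s s)) (M \<delta> X s q))"
proof
  show "M \<delta> (insert s X) p q \<subseteq> M \<delta> X p q \<union> conc (M \<delta> X p s) (conc (kstar (M \<delta> X s s)) (M \<delta> X s q))"
  proof
    fix w assume w: "w \<in> M \<delta> (insert s X) p q"
    show "w \<in> M \<delta> X p q \<union> conc (M \<delta> X p s) (conc (kstar (M \<delta> X s s)) (M \<delta> X s q))"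
    proof (cases "w \<in> M \<delta> X p q")
      case False
      then obtain u v where "w = u @ v" "u \<in> M \<delta> X p s" "v \<in> M \<delta> (insert s X) s q"
        using split_first[OF w] by blast
      then obtain y z where "v = y @ z" "y \<in> kstar (M \<delta> X s s)" "z \<in> M \<delta> X s q"
        using M_loop[OF \<open>v \<in> M \<delta> (insert s X) s q\<close>] unfolding conc_iff by blast
      then have "w = u @ (y @ z)" using \<open>w = u @ v\<close> by simp
      then show ?thesis using concI[OF \<open>u \<in> M \<delta> X p s\<close> concI[OF \<open>y \<in> _\<close> \<open>z \<in> _\<close>]] by simp
    qed simp
  qed
next
  show "M \<delta> X p q \<union> conc (M \<delta> X p s) (conc (kstar (M \<delta> X s s)) (M \<delta> X s q)) \<subseteq> M \<delta> (insert s X) p q"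
  proof
    fix w assume "w \<in> M \<delta> X p q \<union> conc (M \<delta> X p s) (conc (kstar (M \<delta> X s s)) (M \<delta> X s q))"
    then show "w \<in> M \<delta> (insert s X) p q"
    proof
      assume "w \<in> M \<delta> X p q" then show ?thesis using M_mono[of X "insert s X"] by blast
    next
      assume "w \<in> conc (M \<delta> X p s) (conc (kstar (M \<delta> X s s)) (M \<delta> X s q))"
      then obtain u v where uv: "w = u @ v" "u \<in> M \<delta> X p s" "v \<in> conc (kstar (M \<delta> X s s)) (M \<delta> X s q)"
        unfolding conc_iff by blast
      from uv(3) obtain y z where yz: "v = y @ z" "y \<in> kstar (M \<delta> X s s)" "z \<in> M \<delta> X s q"
        unfolding conc_iff by blast
      have e: "w = u @ (y @ z)" "u \<in> M \<delta> X p s" "y \<in> kstar (M \<delta> X s s)" "z \<in> M \<delta> X s q"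
        using uv yz by simp_all
      have u': "u \<in> M \<delta> (insert s X) p s" using e(2) M_mono[of X "insert s X"] by blast
      have z': "z \<in> M \<delta> (insert s X) s q" using e(4) M_mono[of X "insert s X"] by blast
      have y': "y \<in> M \<delta> (insert s X) s s" using kstar_M[OF e(3)] .
      have "y @ z \<in> M \<delta> (insert s X) s q" using M_app[OF y' z'] by simp
      then show ?thesis using M_app[OF u'] e(1) by simp
    qed
  qed
qed

lemma M_empty_finite: "finite (M \<delta> {} p (q::'q) :: ('a::finite) list set)"
proof -
  have "M \<delta> {} p q \<subseteq> insert [] ((\<lambda>c. [c]) ` UNIV)"
  proof
    fix w assume w: "w \<in> M \<delta> {} p q"
    have "length w \<le> 1"
    proof (rule ccontr)
      assume "\<not> length w \<le> 1"
      then have "0 < (1::nat) \<and> 1 < length w" by simp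
      then show False using w unfolding M_def by blast
    qed
    then show "w \<in> insert [] ((\<lambda>c. [c]) ` UNIV)"
      by (cases w) auto
  qed
  then show ?thesis by (rule finite_subset) simp
qed

lemma M_regular: "finite X \<Longrightarrow> regular (M \<delta> X p q :: ('a::finite) list set)"
proof (induction X arbitrary: p q rule: finite_induct)
  case empty
  then show ?case by (rule regular_finite[OF M_empty_finite])
next
  case (insert s X)
  show ?case unfolding M_insert
    by (intro reg_union reg_conc reg_star insert.IH)
qed

lemma dfa_regular:
  assumes fin: "finite {foldl \<delta> q0 w | w. True}"
  shows "regular {x :: ('a::finite) list. foldl \<delta> q0 x \<in> F}"
proof -
  define R where "R = {foldl \<delta> q0 w | w. True}"
  have "{x. foldl \<delta> q0 x \<in> F} = (\<Union>q\<in>F \<inter> R. M \<delta> R q0 q)"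
  proof
    show "{x. foldl \<delta> q0 x \<in> F} \<subseteq> (\<Union>q\<in>F \<inter> R. M \<delta> R q0 q)"
    proof
      fix x assume x: "x \<in> {x. foldl \<delta> q0 x \<in> F}"
      have "x \<in> M \<delta> R q0 (foldl \<delta> q0 x)" unfolding M_def R_def by blast
      moreover have "foldl \<delta> q0 x \<in> F \<inter> R" using x unfolding R_def by blast
      ultimately show "x \<in> (\<Union>q\<in>F \<inter> R. M \<delta> R q0 q)" by blast
    qed
    show "(\<Union>q\<in>F \<inter> R. M \<delta> R q0 q) \<subseteq> {x. foldl \<delta> q0 x \<in> F}"
      unfolding M_def by blast
  qed
  moreover have "regular (\<Union>q\<in>F \<inter> R. M \<delta> R q0 q :: 'a list set)"
    using fin unfolding R_def[symmetric]
    by (intro regular_UN M_regular) (auto intro: finite_subset)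
  ultimately show ?thesis by simp
qed

lemma dfa_quot: "lquot {x. foldl \<delta> q0 x \<in> F} w = {x. foldl \<delta> (foldl \<delta> q0 w) x \<in> F}"
  by (simp add: lquot_def)

lemma dfa_quots: "{lquot {x. foldl \<delta> q0 x \<in> F} w | w. True} =
   (\<lambda>q. {x. foldl \<delta> q x \<in> F}) ` {foldl \<delta> q0 w | w. True}"
  unfolding dfa_quot by blast

lemma dfa_kappa:
  assumes "inj_on (\<lambda>q. {x. foldl \<delta> q x \<in> F}) R" "R = {foldl \<delta> q0 w | w. True}"
  shows "kappa {x. foldl \<delta> q0 x \<in> F} = card R"
  unfolding kappa_def dfa_quots assms(2)[symmetric] using assms(1) by (rule card_image)

lemma sim_lang:
  assumes step: "\<And>q q' c. S q q' \<Longrightarrow> S (\<delta>1 q c) (\<delta>2 q' c)"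
    and acc: "\<And>q q'. S q q' \<Longrightarrow> q \<in> F1 \<Longrightarrow> q' \<in> F2"
  shows "S q q' \<Longrightarrow> foldl \<delta>1 q x \<in> F1 \<Longrightarrow> foldl \<delta>2 q' x \<in> F2"
proof (induction x arbitrary: q q')
  case Nil then show ?case using acc by simp
next
  case (Cons c x)
  then show ?case using step[OF Cons.prems(1), of c] by simp
qed

definition stepS :: "(nat \<Rightarrow> 'a \<Rightarrow> nat) \<Rightarrow> nat \<Rightarrow> nat \<Rightarrow> nat set \<Rightarrow> 'a \<Rightarrow> nat set" where
  "stepS \<delta> D q0 S c = (if (\<lambda>q. \<delta> q c) ` S - {D} = {} then {} else insert q0 ((\<lambda>q. \<delta> q c) ` S - {D}))"

lemma Dset_nil: "Dset L [] = {[]}"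
  unfolding Dset_def by auto

lemma Dset_snoc: "Dset L (y @ [c]) = (\<lambda>v. v @ [c]) ` Dset L y \<union> (if y @ [c] \<in> kstar L then {[]} else {})"
proof
  show "Dset L (y @ [c]) \<subseteq> (\<lambda>v. v @ [c]) ` Dset L y \<union> (if y @ [c] \<in> kstar L then {[]} else {})"
  proof
    fix v' assume "v' \<in> Dset L (y @ [c])"
    then obtain u where u: "y @ [c] = u @ v'" "u \<in> kstar L" unfolding Dset_def by blast
    show "v' \<in> (\<lambda>v. v @ [c]) ` Dset L y \<union> (if y @ [c] \<in> kstar L then {[]} else {})"
    proof (cases v' rule: rev_exhaust)
      case Nil
      then show ?thesis using u by simp
    next
      case (snoc v d)
      then have "y = u @ v" "d = c" using u(1) by auto
      then have "v \<in> Dset L y" using u(2) unfolding Dset_def by blast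
      then show ?thesis using snoc \<open>d = c\<close> by blast
    qed
  qed
next
  show "(\<lambda>v. v @ [c]) ` Dset L y \<union> (if y @ [c] \<in> kstar L then {[]} else {}) \<subseteq> Dset L (y @ [c])"
  proof
    fix v' assume "v' \<in> (\<lambda>v. v @ [c]) ` Dset L y \<union> (if y @ [c] \<in> kstar L then {[]} else {})"
    then show "v' \<in> Dset L (y @ [c])"
    proof
      assume "v' \<in> (\<lambda>v. v @ [c]) ` Dset L y"
      then obtain v u where "v' = v @ [c]" "y = u @ v" "u \<in> kstar L" unfolding Dset_def by blast
      then show ?thesis unfolding Dset_def by auto
    next
      assume "v' \<in> (if y @ [c] \<in> kstar L then {[]} else {})"
      then have "v' = []" "y @ [c] \<in> kstar L" by (auto split: if_splits)
      then show ?thesis unfolding Dset_def by auto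
    qed
  qed
qed

lemma star_snoc:
  assumes eL: "[] \<in> L"
  shows "y @ [c] \<in> kstar L \<longleftrightarrow> (\<exists>v\<in>Dset L y. v @ [c] \<in> L)"
proof
  assume "y @ [c] \<in> kstar L"
  then obtain u v y' z where s: "y = u @ v" "u \<in> kstar L" "[c] = y' @ z" "v @ y' \<in> L" "z \<in> kstar L"
    using star_split[OF eL, of "y @ [c]" y "[c]"] by blast
  have vD: "v \<in> Dset L y" using s unfolding Dset_def by blast
  show "\<exists>v\<in>Dset L y. v @ [c] \<in> L"
  proof (cases y')
    case Nil
    then have "z = [c]" "v \<in> L" using s by auto
    then have "[c] \<in> L" using kstar_single s(5) by simp
    have "y \<in> kstar L" using s(1,2) \<open>v \<in> L\<close> kstar_app L_sub_kstar by blast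
    then have "[] \<in> Dset L y" unfolding Dset_def by (intro CollectI exI[of _ y]) simp
    then show ?thesis using \<open>[c] \<in> L\<close> by force
  next
    case (Cons d y'')
    then have "y' = [c]" using s(3) by (cases y'') auto
    then show ?thesis using vD s(4) by blast
  qed
next
  assume "\<exists>v\<in>Dset L y. v @ [c] \<in> L"
  then obtain u v where "y = u @ v" "u \<in> kstar L" "v @ [c] \<in> L" unfolding Dset_def by blast
  then show "y @ [c] \<in> kstar L" using kstar_app[OF \<open>u \<in> kstar L\<close> L_sub_kstar[OF \<open>v @ [c] \<in> L\<close>]] by simp
qed

theorem star_dfa:
  assumes dD: "\<And>c. \<delta> D c = D" and q0D: "q0 \<noteq> D"
  shows "kstar {x. foldl \<delta> q0 x \<noteq> D} = {x. foldl (stepS \<delta> D q0) {q0} x \<noteq> {}}"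
proof -
  define L where "L = {x. foldl \<delta> q0 x \<noteq> D}"
  have eL: "[] \<in> L" unfolding L_def using q0D by simp
  define P where "P y = (\<lambda>v. foldl \<delta> q0 v) ` Dset L y - {D}" for y
  have inS: "y \<in> kstar L \<longleftrightarrow> P y \<noteq> {}" for y
  proof
    assume "y \<in> kstar L"
    then have "[] \<in> Dset L y" unfolding Dset_def by (intro CollectI exI[of _ y]) simp
    then have "q0 \<in> P y" unfolding P_def using q0D by force
    then show "P y \<noteq> {}" by blast
  next
    assume "P y \<noteq> {}"
    then obtain v where "v \<in> Dset L y" "foldl \<delta> q0 v \<noteq> D" unfolding P_def by blast
    then obtain u where "y = u @ v" "u \<in> kstar L" "v \<in> L" unfolding Dset_def L_def by blast
    then show "y \<in> kstar L" using kstar_app L_sub_kstar by blast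
  qed
  have Psnoc: "P (y @ [c]) = stepS \<delta> D q0 (P y) c" for y c
  proof -
    define X where "X = (\<lambda>v. foldl \<delta> q0 v) ` Dset L y"
    define T where "T = (\<lambda>q. \<delta> q c) ` (X - {D}) - {D}"
    have T2: "T = (\<lambda>q. \<delta> q c) ` X - {D}" unfolding T_def using dD by auto
    have cond: "y @ [c] \<in> kstar L \<longleftrightarrow> T \<noteq> {}"
    proof -
      have "y @ [c] \<in> kstar L \<longleftrightarrow> (\<exists>v\<in>Dset L y. v @ [c] \<in> L)" by (rule star_snoc[OF eL])
      also have "\<dots> \<longleftrightarrow> (\<exists>v\<in>Dset L y. \<delta> (foldl \<delta> q0 v) c \<noteq> D)" unfolding L_def by simp
      also have "\<dots> \<longleftrightarrow> T \<noteq> {}" unfolding T2 X_def by blast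
      finally show ?thesis .
    qed
    have "P (y @ [c]) = ((\<lambda>v. foldl \<delta> q0 v) ` ((\<lambda>v. v @ [c]) ` Dset L y) \<union> (if y @ [c] \<in> kstar L then {q0} else {})) - {D}"
      unfolding P_def Dset_snoc by auto
    also have "(\<lambda>v. foldl \<delta> q0 v) ` ((\<lambda>v. v @ [c]) ` Dset L y) = (\<lambda>q. \<delta> q c) ` X"
      unfolding X_def image_image by simp
    finally have "P (y @ [c]) = ((\<lambda>q. \<delta> q c) ` X \<union> (if T \<noteq> {} then {q0} else {})) - {D}"
      using cond by simp
    also have "\<dots> = (if T = {} then {} else insert q0 T)" unfolding T2 using q0D by auto
    also have "\<dots> = stepS \<delta> D q0 (P y) c" unfolding stepS_def P_def X_def[symmetric] T_def by simp
    finally show ?thesis .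
  qed
  have Pf: "P y = foldl (stepS \<delta> D q0) {q0} y" for y
  proof (induction y rule: rev_induct)
    case Nil
    then show ?case unfolding P_def Dset_nil using q0D by simp
  next
    case (snoc c y)
    then show ?case using Psnoc by simp
  qed
  show ?thesis unfolding L_def[symmetric] using inS Pf by blast
qed

lemma stepS_empty[simp]: "stepS \<delta> D q0 {} c = {}"
  unfolding stepS_def by simp

lemma foldl_stepS_empty[simp]: "foldl (stepS \<delta> D q0) {} x = {}"
  by (induction x) simp_all

lemma stepS_single: "stepS \<delta> D q0 {q} c = (if \<delta> q c = D then {} else {q0, \<delta> q c})"
  unfolding stepS_def by auto

lemma stepS_UN: "stepS \<delta> D q0 S c = (\<Union>q\<in>S. stepS \<delta> D q0 {q} c)"
proof (cases "\<exists>q\<in>S. \<delta> q c \<noteq> D")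
  case True
  then have ne: "(\<lambda>q. \<delta> q c) ` S - {D} \<noteq> {}" by blast
  have "stepS \<delta> D q0 S c = insert q0 ((\<lambda>q. \<delta> q c) ` S - {D})"
    unfolding stepS_def using ne by simp
  also have "\<dots> = (\<Union>q\<in>S. stepS \<delta> D q0 {q} c)"
  proof (rule set_eqI)
    fix p
    show "p \<in> insert q0 ((\<lambda>q. \<delta> q c) ` S - {D}) \<longleftrightarrow> p \<in> (\<Union>q\<in>S. stepS \<delta> D q0 {q} c)"
      unfolding stepS_single using True by auto
  qed
  finally show ?thesis .
next
  case False
  then have "(\<lambda>q. \<delta> q c) ` S - {D} = {}" by blast
  then have "stepS \<delta> D q0 S c = {}" unfolding stepS_def by simp
  moreover have "(\<Union>q\<in>S. stepS \<delta> D q0 {q} c) = {}" unfolding stepS_single using False by auto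
  ultimately show ?thesis by simp
qed

lemma foldl_stepS_UN: "foldl (stepS \<delta> D q0) S x = (\<Union>q\<in>S. foldl (stepS \<delta> D q0) {q} x)"
proof (induction x arbitrary: S)
  case Nil
  then show ?case by auto
next
  case (Cons c x)
  have "foldl (stepS \<delta> D q0) S (c # x) = foldl (stepS \<delta> D q0) (stepS \<delta> D q0 S c) x" by simp
  also have "\<dots> = (\<Union>p\<in>stepS \<delta> D q0 S c. foldl (stepS \<delta> D q0) {p} x)" by (rule Cons.IH)
  also have "\<dots> = (\<Union>q\<in>S. \<Union>p\<in>stepS \<delta> D q0 {q} c. foldl (stepS \<delta> D q0) {p} x)"
    by (subst stepS_UN) (rule UN_UN_flatten)
  also have "\<dots> = (\<Union>q\<in>S. foldl (stepS \<delta> D q0) {q} (c # x))"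
  proof (rule SUP_cong[OF refl])
    fix q show "(\<Union>p\<in>stepS \<delta> D q0 {q} c. foldl (stepS \<delta> D q0) {p} x) = foldl (stepS \<delta> D q0) {q} (c # x)"
      using Cons.IH[of "stepS \<delta> D q0 {q} c"] by simp
  qed
  finally show ?case .
qed

lemma foldl_stepS_insert:
  "foldl (stepS \<delta> D q0) (insert p S) x = foldl (stepS \<delta> D q0) {p} x \<union> foldl (stepS \<delta> D q0) S x"
  using foldl_stepS_UN[of \<delta> D q0 "insert p S" x] foldl_stepS_UN[of \<delta> D q0 S x] by simp

locale F1 =
  fixes m :: nat and a b :: "'a::finite"
  assumes ab: "a \<noteq> b"
begin

definition dl :: "nat \<Rightarrow> 'a \<Rightarrow> nat" where
  "dl q c = (if m < q then Suc m else if c = a then (if q < m then Suc q else Suc m)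
     else if c = b then (if q = 0 then Suc m else if q = 1 then (if m = 1 then 1 else Suc m)
       else if q < m then Suc q else 2) else Suc m)"

definition St where "St = stepS dl (Suc m) 0"

definition alive where "alive q x = (foldl St {q} x \<noteq> {})"

definition LF where "LF = {x. foldl dl 0 x \<noteq> Suc m}"

lemma dl_dead[simp]: "dl (Suc m) c = Suc m"
  unfolding dl_def by simp

lemma foldl_dead[simp]: "foldl dl (Suc m) x = Suc m"
  by (induction x) simp_all

lemma dl_le: "dl q c \<le> Suc m"
  unfolding dl_def by auto

lemma foldl_le: "q \<le> Suc m \<Longrightarrow> foldl dl q x \<le> Suc m"
  by (induction x arbitrary: q) (auto simp: dl_le)

lemma dl_a: "q \<le> m \<Longrightarrow> dl q a = (if q < m then Suc q else Suc m)"
  unfolding dl_def by simp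

lemma dl_b0: "dl 0 b = Suc m"
  unfolding dl_def using ab by simp

lemma foldl_as: "q \<le> m \<Longrightarrow> foldl dl q (replicate j a) = (if q + j \<le> m then q + j else Suc m)"
proof (induction j arbitrary: q)
  case 0 then show ?case by simp
next
  case (Suc j)
  show ?case
  proof (cases "q < m")
    case True
    then show ?thesis using Suc.IH[of "Suc q"] by (simp add: dl_a)
  next
    case False
    then show ?thesis using Suc.prems by (simp add: dl_a)
  qed
qed

lemma LF_prefix: "prefix_closed LF"
  unfolding prefix_closed_def LF_def
proof (intro ballI allI impI)
  fix w u assume w: "w \<in> {x. foldl dl 0 x \<noteq> Suc m}" and "prefix u w"
  then obtain v where "w = u @ v" by (auto simp: prefix_def)
  then show "u \<in> {x. foldl dl 0 x \<noteq> Suc m}" using w by (cases "foldl dl 0 u = Suc m") auto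
qed

lemma reach_le: "{foldl dl 0 w | w. True} = {..Suc m}"
proof
  show "{foldl dl 0 w | w. True} \<subseteq> {..Suc m}" using foldl_le[of 0] by auto
  show "{..Suc m} \<subseteq> {foldl dl 0 w | w. True}"
  proof
    fix q assume "q \<in> {..Suc m}"
    then have "q = foldl dl 0 (replicate q a)" using foldl_as[of 0 q] foldl_as[of 0 "Suc m"]
      by (cases "q \<le> m") auto
    then show "q \<in> {foldl dl 0 w | w. True}" by blast
  qed
qed

lemma LF_eq: "LF = {x. foldl dl 0 x \<in> - {Suc m}}"
  unfolding LF_def by simp

lemma LF_regular: "regular LF"
  unfolding LF_eq by (rule dfa_regular) (unfold reach_le, simp)

lemma LF_kappa: "kappa LF = m + 2"
proof -
  have inj: "inj_on (\<lambda>q. {x. foldl dl q x \<in> - {Suc m}}) {..Suc m}"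
  proof (rule inj_onI)
    fix q q' assume q: "q \<in> {..Suc m}" and q': "q' \<in> {..Suc m}"
      and eq: "{x. foldl dl q x \<in> - {Suc m}} = {x. foldl dl q' x \<in> - {Suc m}}"
    have mem: "replicate j a \<in> {x. foldl dl p x \<in> - {Suc m}} \<longleftrightarrow> p + j \<le> m" if "p \<le> Suc m" for p j
    proof (cases "p = Suc m")
      case True then show ?thesis by simp
    next
      case False then show ?thesis using that foldl_as[of p j] by auto
    qed
    have "replicate (m - q) a \<in> {x. foldl dl q x \<in> - {Suc m}} \<longleftrightarrow> q \<le> m"
      using mem[of q "m - q"] q by auto
    moreover have "replicate (m - q') a \<in> {x. foldl dl q' x \<in> - {Suc m}} \<longleftrightarrow> q' \<le> m"
      using mem[of q' "m - q'"] q' by auto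
    ultimately show "q = q'" using eq mem[of q "m - q'"] mem[of q' "m - q"] q q'
      by (cases "q \<le> m"; cases "q' \<le> m") auto
  qed
  have "kappa LF = card {..Suc m}" unfolding LF_eq
    by (rule dfa_kappa[OF inj]) (rule reach_le[symmetric])
  then show ?thesis by simp
qed

lemma star_LF: "kstar LF = {x. foldl St {0} x \<in> - {{}}}"
proof -
  have "kstar LF = {x. foldl St {0} x \<noteq> {}}"
    unfolding LF_def St_def by (rule star_dfa) simp_all
  then show ?thesis by simp
qed

lemma alive_nil[simp]: "alive q []"
  unfolding alive_def by simp

lemma alive_cons: "alive q (c # x) \<longleftrightarrow> dl q c \<noteq> Suc m \<and> (alive 0 x \<or> alive (dl q c) x)"
proof (cases "dl q c = Suc m")
  case True
  then show ?thesis unfolding alive_def St_def by (simp add: stepS_single)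
next
  case False
  then have "foldl St {q} (c # x) = foldl St {0} x \<union> foldl St {dl q c} x"
    unfolding St_def using foldl_stepS_insert[of dl "Suc m" 0 0 "{dl q c}" x]
    by (simp add: stepS_single)
  then show ?thesis unfolding alive_def using False by simp
qed

lemma langS: "x \<in> {x. foldl St S x \<in> - {{}}} \<longleftrightarrow> (\<exists>q\<in>S. alive q x)"
proof -
  have "foldl St S x = (\<Union>q\<in>S. foldl St {q} x)" unfolding St_def by (rule foldl_stepS_UN)
  then show ?thesis unfolding alive_def by simp
qed

end

fun blk :: "'a \<Rightarrow> 'a \<Rightarrow> bool list \<Rightarrow> 'a list" where
  "blk a b [] = []"
| "blk a b (True # bs) = b # blk a b bs"
| "blk a b (False # bs) = a # b # blk a b bs"

fun sim :: "nat \<Rightarrow> nat \<Rightarrow> bool list \<Rightarrow> bool" where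
  "sim k i [] = True"
| "sim k i (True # bs) = sim k ((i + 1) mod k) bs"
| "sim k i (False # bs) = (i \<noteq> k - 1 \<and> sim k ((i + 2) mod k) bs)"

definition Pw :: "nat \<Rightarrow> bool list" where "Pw k = False # replicate (k - 1) True"

definition tb :: "nat \<Rightarrow> nat \<Rightarrow> bool list" where
  "tb k j = replicate (k - j) True @ concat (replicate (k - 1) (Pw k))"

lemma sim_Ts: "0 < k \<Longrightarrow> i < k \<Longrightarrow> sim k i (replicate r True @ bs) = sim k ((i + r) mod k) bs"
proof (induction r arbitrary: i)
  case 0 then show ?case by simp
next
  case (Suc r)
  have "sim k i (replicate (Suc r) True @ bs) = sim k ((i + 1) mod k) (replicate r True @ bs)" by simp
  also have "\<dots> = sim k (((i + 1) mod k + r) mod k) bs" using Suc by simp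
  also have "((i + 1) mod k + r) mod k = (i + Suc r) mod k" by (simp add: mod_add_left_eq)
  finally show ?case .
qed

lemma sim_P: "2 \<le> k \<Longrightarrow> i < k \<Longrightarrow> sim k i (Pw k @ bs) = (i \<noteq> k - 1 \<and> sim k ((i + 1) mod k) bs)"
proof -
  assume k: "2 \<le> k" and i: "i < k"
  have "sim k i (Pw k @ bs) = (i \<noteq> k - 1 \<and> sim k ((i + 2) mod k) (replicate (k - 1) True @ bs))"
    by (simp add: Pw_def)
  also have "sim k ((i + 2) mod k) (replicate (k - 1) True @ bs) = sim k (((i + 2) mod k + (k - 1)) mod k) bs"
    using k by (intro sim_Ts) auto
  also have "((i + 2) mod k + (k - 1)) mod k = (i + 1) mod k"
  proof -
    have "((i + 2) mod k + (k - 1)) mod k = (i + 2 + (k - 1)) mod k" by (simp add: mod_add_left_eq)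
    also have "i + 2 + (k - 1) = (i + 1) + k" using k by simp
    also have "((i + 1) + k) mod k = (i + 1) mod k" by (rule mod_add_self2)
    finally show ?thesis .
  qed
  finally show ?thesis .
qed

lemma sim_Ps: "2 \<le> k \<Longrightarrow> i < k \<Longrightarrow> sim k i (concat (replicate n (Pw k))) = (\<forall>t<n. (i + t) mod k \<noteq> k - 1)"
proof (induction n arbitrary: i)
  case 0 then show ?case by simp
next
  case (Suc n)
  have "sim k i (concat (replicate (Suc n) (Pw k))) = (i \<noteq> k - 1 \<and> sim k ((i + 1) mod k) (concat (replicate n (Pw k))))"
    using sim_P[OF Suc.prems] by simp
  also have "sim k ((i + 1) mod k) (concat (replicate n (Pw k))) = (\<forall>t<n. ((i + 1) mod k + t) mod k \<noteq> k - 1)"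
    using Suc.IH[of "(i + 1) mod k"] Suc.prems by simp
  also have "\<dots> = (\<forall>t<n. (i + Suc t) mod k \<noteq> k - 1)" by (simp add: mod_add_left_eq)
  also have "(i \<noteq> k - 1 \<and> (\<forall>t<n. (i + Suc t) mod k \<noteq> k - 1)) = (\<forall>t<Suc n. (i + t) mod k \<noteq> k - 1)"
    using Suc.prems by (auto simp: less_Suc_eq_0_disj)
  finally show ?case .
qed

lemma sim_test: "1 \<le> k \<Longrightarrow> i < k \<Longrightarrow> sim k i (concat (replicate (k - 1) (Pw k))) = (i = 0)"
proof (cases "k = 1")
  case True
  assume "i < k" then show ?thesis using True by simp
next
  case False
  assume k: "1 \<le> k" and i: "i < k"
  then have k2: "2 \<le> k" using False by simp
  show ?thesis unfolding sim_Ps[OF k2 i]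
  proof
    assume h: "\<forall>t<k - 1. (i + t) mod k \<noteq> k - 1"
    show "i = 0"
    proof (rule ccontr)
      assume "i \<noteq> 0"
      then have "k - 1 - i < k - 1" "(i + (k - 1 - i)) mod k = k - 1" using i by auto
      then show False using h by blast
    qed
  next
    assume "i = 0" then show "\<forall>t<k - 1. (i + t) mod k \<noteq> k - 1" by simp
  qed
qed

lemma sim_tb: "1 \<le> k \<Longrightarrow> i < k \<Longrightarrow> j < k \<Longrightarrow> sim k i (tb k j) = (i = j)"
proof -
  assume k: "1 \<le> k" and i: "i < k" and j: "j < k"
  have "sim k i (tb k j) = sim k ((i + (k - j)) mod k) (concat (replicate (k - 1) (Pw k)))"
    unfolding tb_def using k i by (intro sim_Ts) auto
  also have "\<dots> = ((i + (k - j)) mod k = 0)" using k by (intro sim_test) auto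
  also have "\<dots> = (i = j)"
  proof (cases "j \<le> i")
    case True
    then have e: "i + (k - j) = (i - j) + k" using j by simp
    have "(i + (k - j)) mod k = ((i - j) + k) mod k" by (simp only: e)
    also have "\<dots> = (i - j) mod k" by (rule mod_add_self2)
    also have "\<dots> = i - j" using i by simp
    finally have "(i + (k - j)) mod k = i - j" .
    then show ?thesis using True by auto
  next
    case False
    then have "(i + (k - j)) mod k = i + (k - j)" using j by simp
    then show ?thesis using False j by auto
  qed
  finally show ?thesis .
qed

lemma tb_cons: "j < k \<Longrightarrow> \<exists>r. tb k j = True # r"
  unfolding tb_def by (cases "k - j") auto

context F1
begin

lemma dl_b_ge2: "2 \<le> p \<Longrightarrow> p \<le> m \<Longrightarrow> dl p b = (if p < m then Suc p else 2)"
  unfolding dl_def using ab by auto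

lemma dl_b1: "2 \<le> m \<Longrightarrow> dl 1 b = Suc m"
  unfolding dl_def using ab by auto

lemma alive_dead_first: "dl q c = Suc m \<Longrightarrow> \<not> alive q (c # x)"
  by (simp add: alive_cons)

lemma alive_blk0: "2 \<le> m \<Longrightarrow> alive 0 (blk a b bs) \<longleftrightarrow> bs = []"
proof (cases bs)
  case Nil then show ?thesis by simp
next
  case (Cons h bs')
  assume m2: "2 \<le> m"
  show ?thesis
  proof (cases h)
    case True
    then show ?thesis using Cons dl_b0 alive_dead_first by simp
  next
    case False
    have "\<not> alive 0 (b # blk a b bs')" using dl_b0 alive_dead_first by blast
    moreover have "\<not> alive 1 (b # blk a b bs')" using dl_b1[OF m2] alive_dead_first by blast
    moreover have "dl 0 a = 1" using m2 dl_a[of 0] by simp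
    ultimately show ?thesis using Cons False by (simp add: alive_cons)
  qed
qed

lemma alive_b: "2 \<le> m \<Longrightarrow> 2 \<le> p \<Longrightarrow> p \<le> m \<Longrightarrow> alive p (b # blk a b bs) \<longleftrightarrow> alive (dl p b) (blk a b bs)"
proof -
  assume m2: "2 \<le> m" and p: "2 \<le> p" "p \<le> m"
  have nd: "dl p b \<noteq> Suc m" using dl_b_ge2[OF p] p by auto
  show ?thesis
  proof (cases "bs = []")
    case True then show ?thesis using nd by (simp add: alive_cons)
  next
    case False
    then have "\<not> alive 0 (blk a b bs)" using alive_blk0[OF m2] by simp
    then show ?thesis using nd by (simp add: alive_cons)
  qed
qed

lemma alive_blk: "2 \<le> m \<Longrightarrow> 2 \<le> p \<Longrightarrow> p \<le> m \<Longrightarrow> alive p (blk a b bs) \<longleftrightarrow> sim (m - 1) (p - 2) bs"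
proof (induction bs arbitrary: p)
  case Nil then show ?case by simp
next
  case (Cons h bs)
  note m2 = Cons.prems(1) and p = Cons.prems(2,3)
  show ?case
  proof (cases h)
    case True
    have r: "2 \<le> dl p b" "dl p b \<le> m" using dl_b_ge2[OF p] p by auto
    have "alive p (blk a b (h # bs)) \<longleftrightarrow> alive (dl p b) (blk a b bs)"
      using alive_b[OF m2 p] True by simp
    also have "\<dots> \<longleftrightarrow> sim (m - 1) (dl p b - 2) bs" using Cons.IH[OF m2 r] .
    also have "dl p b - 2 = (p - 2 + 1) mod (m - 1)"
    proof (cases "p < m")
      case True then show ?thesis using dl_b_ge2[OF p] p by simp
    next
      case False then have "p = m" using p by simp
      then have "p - 2 + 1 = m - 1" using m2 by simp
      then show ?thesis using dl_b_ge2[OF p] \<open>p = m\<close> by simp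
    qed
    finally show ?thesis using True by simp
  next
    case False
    show ?thesis
    proof (cases "p < m")
      case False
      then have "p = m" using p by simp
      then have "dl p a = Suc m" using dl_a[of p] by simp
      then have "\<not> alive p (blk a b (h # bs))" using \<open>\<not> h\<close> alive_dead_first by simp
      moreover have "\<not> sim (m - 1) (p - 2) (h # bs)"
      proof -
        have "p - 2 = m - 1 - 1" using \<open>p = m\<close> m2 by simp
        then show ?thesis using \<open>\<not> h\<close> by simp
      qed
      ultimately show ?thesis by simp
    next
      case True
      have dla: "dl p a = Suc p" using dl_a[of p] True by simp
      have p1: "2 \<le> Suc p" "Suc p \<le> m" using p True by auto
      have r: "2 \<le> dl (Suc p) b" "dl (Suc p) b \<le> m" using dl_b_ge2[OF p1] p1 by auto
      have "\<not> alive 0 (b # blk a b bs)" using dl_b0 alive_dead_first by blast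
      moreover have e: "blk a b (h # bs) = a # (b # blk a b bs)" using False by simp
      ultimately have "alive p (blk a b (h # bs)) \<longleftrightarrow> alive (Suc p) (b # blk a b bs)"
        unfolding e alive_cons[of p a] dla using True by simp
      also have "\<dots> \<longleftrightarrow> alive (dl (Suc p) b) (blk a b bs)" using alive_b[OF m2 p1] .
      also have "\<dots> \<longleftrightarrow> sim (m - 1) (dl (Suc p) b - 2) bs" using Cons.IH[OF m2 r] .
      also have "dl (Suc p) b - 2 = (p - 2 + 2) mod (m - 1)"
      proof (cases "Suc p < m")
        case True then show ?thesis using dl_b_ge2[OF p1] p by simp
      next
        case False then have "Suc p = m" using p1 by simp
        then have "p - 2 + 2 = m - 1" using p by simp
        then show ?thesis using dl_b_ge2[OF p1] \<open>Suc p = m\<close> by simp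
      qed
      finally have "alive p (blk a b (h # bs)) \<longleftrightarrow> sim (m - 1) ((p - 2 + 2) mod (m - 1)) bs" .
      moreover have "p - 2 \<noteq> m - 1 - 1" using True p by simp
      ultimately show ?thesis using False by simp
    qed
  qed
qed

definition tw :: "nat \<Rightarrow> 'a list" where
  "tw j = (if m = 1 then [b] else if j = 1 then a # blk a b (tb (m - 1) 0) else blk a b (tb (m - 1) (j - 2)))"

lemma alive_tbj:
  assumes m2: "2 \<le> m" and j: "2 \<le> j" "j \<le> m" and q: "q \<le> m"
  shows "alive q (blk a b (tb (m - 1) (j - 2))) \<longleftrightarrow> q = j"
proof -
  have "j - 2 < m - 1" using j m2 by simp
  then obtain r where r: "tb (m - 1) (j - 2) = True # r" using tb_cons[of "j - 2" "m - 1"] by blast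
  show ?thesis
  proof (cases "q \<le> 1")
    case True
    then consider "q = 0" | "q = 1" by linarith
    then show ?thesis
    proof cases
      case 1
      have "\<not> alive 0 (b # blk a b r)" by (rule alive_dead_first[OF dl_b0])
      then show ?thesis using 1 r j by simp
    next
      case 2
      then show ?thesis using r alive_dead_first dl_b1[OF m2] j by simp
    qed
  next
    case False
    then have "alive q (blk a b (tb (m - 1) (j - 2))) \<longleftrightarrow> sim (m - 1) (q - 2) (tb (m - 1) (j - 2))"
      using alive_blk[OF m2 _ q] by simp
    also have "\<dots> \<longleftrightarrow> q - 2 = j - 2" using m2 q j False by (intro sim_tb) auto
    finally show ?thesis using False j by auto
  qed
qed

lemma tw_alive:
  assumes j: "1 \<le> j" "j \<le> m" and q: "q \<le> m"
  shows "alive q (tw j) \<longleftrightarrow> q = j"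
proof (cases "m = 1")
  case True
  then have "j = 1" using j by simp
  have d0: "dl 0 b = Suc m" by (rule dl_b0)
  have d1: "dl 1 b \<noteq> Suc m" using True ab unfolding dl_def by simp
  have twb: "tw j = [b]" unfolding tw_def using True by simp
  have al: "alive q [b] \<longleftrightarrow> dl q b \<noteq> Suc m" by (simp add: alive_cons)
  show ?thesis
  proof (cases "q = 0")
    case True then show ?thesis using twb al d0 \<open>j = 1\<close> by simp
  next
    case False then have "q = 1" using q \<open>m = 1\<close> by simp
    then show ?thesis using twb al d1 \<open>j = 1\<close> by simp
  qed
next
  case False
  then have m2: "2 \<le> m" using j by simp
  show ?thesis
  proof (cases "j = 1")
    case False
    then show ?thesis using alive_tbj[OF m2 _ j(2) q] j \<open>m \<noteq> 1\<close> by (simp add: tw_def)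
  next
    case True
    let ?X = "blk a b (tb (m - 1) 0)"
    have X: "alive p ?X \<longleftrightarrow> p = 2" if "p \<le> m" for p
      using alive_tbj[OF m2 _ m2 that] by simp
    have "alive q (tw j) \<longleftrightarrow> alive q (a # ?X)" using True \<open>m \<noteq> 1\<close> by (simp add: tw_def)
    also have "\<dots> \<longleftrightarrow> q = 1"
    proof (cases "q < m")
      case True
      then have "dl q a = Suc q" using dl_a[of q] by simp
      then show ?thesis using X[of 0] X[of "Suc q"] True by (simp add: alive_cons)
    next
      case False
      then have "dl q a = Suc m" using dl_a[of q] q by simp
      then show ?thesis using False m2 alive_dead_first by auto
    qed
    finally show ?thesis using True by simp
  qed
qed

definition E where "E = insert {} (insert 0 ` Pow {1..m})"

lemma langS_inj: "inj_on (\<lambda>S. {x. foldl St S x \<in> - {{}}}) E"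
proof (rule inj_onI)
  fix S S' assume S: "S \<in> E" and S': "S' \<in> E"
    and eq: "{x. foldl St S x \<in> - {{}}} = {x. foldl St S' x \<in> - {{}}}"
  have mem: "x \<in> {x. foldl St S x \<in> - {{}}} \<longleftrightarrow> x \<in> {x. foldl St S' x \<in> - {{}}}" for x
    using eq by simp
  have nil: "[] \<in> {x. foldl St X x \<in> - {{}}} \<longleftrightarrow> X \<noteq> {}" for X by simp
  show "S = S'"
  proof (cases "S = {} \<or> S' = {}")
    case True
    then show ?thesis using mem[of "[]"] nil by auto
  next
    case False
    then obtain T T' where T: "S = insert 0 T" "T \<subseteq> {1..m}" and T': "S' = insert 0 T'" "T' \<subseteq> {1..m}"
      using S S' unfolding E_def by auto
    have tst: "tw j \<in> {x. foldl St X x \<in> - {{}}} \<longleftrightarrow> j \<in> X"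
      if "X \<subseteq> {..m}" "1 \<le> j" "j \<le> m" for X j
    proof -
      have "tw j \<in> {x. foldl St X x \<in> - {{}}} \<longleftrightarrow> (\<exists>q\<in>X. alive q (tw j))" by (rule langS)
      also have "\<dots> \<longleftrightarrow> (\<exists>q\<in>X. q = j)" using tw_alive[OF that(2,3)] that(1) by auto
      finally show ?thesis by simp
    qed
    have X1: "S \<subseteq> {..m}" using T by auto
    have X2: "S' \<subseteq> {..m}" using T' by auto
    show ?thesis
    proof (rule ccontr)
      assume "S \<noteq> S'"
      then obtain j where "j \<in> S \<longleftrightarrow> j \<notin> S'" "j \<noteq> 0" using T T' by blast
      moreover have "j \<in> S \<or> j \<in> S'" using calculation by blast
      then have "1 \<le> j" "j \<le> m" using T T' \<open>j \<noteq> 0\<close> by auto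
      ultimately show False using mem[of "tw j"] tst[OF X1] tst[OF X2] by blast
    qed
  qed
qed

end

context F1
begin

lemma St_E: "St S c \<in> E"
proof (cases "(\<lambda>q. dl q c) ` S - {Suc m} = {}")
  case True
  then show ?thesis unfolding St_def stepS_def E_def by simp
next
  case False
  define X where "X = (\<lambda>q. dl q c) ` S - {Suc m}"
  have "X \<subseteq> {..m}" unfolding X_def using dl_le by (auto simp: le_Suc_eq)
  then have "X - {0} \<in> Pow {1..m}" by auto
  moreover have "St S c = insert 0 (X - {0})" unfolding St_def stepS_def X_def[symmetric] using False X_def by simp
  ultimately show ?thesis unfolding E_def by blast
qed

lemma foldl_E: "S \<in> E \<Longrightarrow> foldl St S w \<in> E"
proof (induction w arbitrary: S)
  case Nil then show ?case by simp
next
  case (Cons c w) then show ?case using St_E by simp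
qed

lemma zero_E: "{0} \<in> E" unfolding E_def by auto

definition reach where "reach S = (\<exists>w. foldl St {0} w = S)"

lemma reach_step: "reach S \<Longrightarrow> reach (St S c)"
  unfolding reach_def by (metis foldl_Cons foldl_Nil foldl_append)

lemma reach_zero: "reach {0}" unfolding reach_def by (intro exI[of _ "[]"]) simp

lemma St_a:
  assumes m1: "1 \<le> m" and T: "T \<subseteq> {1..m}"
  shows "St (insert 0 T) a = insert 0 (insert 1 (Suc ` (T - {m})))"
proof -
  have img: "(\<lambda>q. dl q a) ` insert 0 T - {Suc m} = insert 1 (Suc ` (T - {m}))"
  proof (rule set_eqI, rule iffI)
    fix x assume "x \<in> (\<lambda>q. dl q a) ` insert 0 T - {Suc m}"
    then obtain q where q: "q \<in> insert 0 T" "x = dl q a" "x \<noteq> Suc m" by blast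
    have qm: "q \<le> m" using q(1) T by auto
    then have "q < m" "x = Suc q" using q dl_a[OF qm] by (auto split: if_splits)
    then show "x \<in> insert 1 (Suc ` (T - {m}))" using q(1) by auto
  next
    fix x assume x: "x \<in> insert 1 (Suc ` (T - {m}))"
    show "x \<in> (\<lambda>q. dl q a) ` insert 0 T - {Suc m}"
    proof (cases "x = 1")
      case True
      have "dl 0 a = 1" using dl_a[of 0] m1 by simp
      then show ?thesis using True m1 by force
    next
      case False
      then obtain q where "q \<in> T" "q \<noteq> m" "x = Suc q" using x by blast
      then have "q < m" using T by auto
      then have "dl q a = x" using dl_a[of q] \<open>x = Suc q\<close> by simp
      then show ?thesis using \<open>q \<in> T\<close> \<open>q < m\<close> \<open>x = Suc q\<close> by force
    qed
  qed
  show ?thesis unfolding St_def stepS_def img by simp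
qed

definition rot :: "nat \<Rightarrow> nat" where "rot p = (if p < m then Suc p else 2)"

lemma St_b:
  assumes m2: "2 \<le> m" and T: "T \<subseteq> {1..m}" and ne: "T - {1} \<noteq> {}"
  shows "St (insert 0 T) b = insert 0 (rot ` (T - {1}))"
proof -
  have img: "(\<lambda>q. dl q b) ` insert 0 T - {Suc m} = rot ` (T - {1})"
  proof (rule set_eqI, rule iffI)
    fix x assume "x \<in> (\<lambda>q. dl q b) ` insert 0 T - {Suc m}"
    then obtain q where q: "q \<in> insert 0 T" "x = dl q b" "x \<noteq> Suc m" by blast
    have "q \<noteq> 0"
    proof
      assume "q = 0" then show False using q dl_b0 by simp
    qed
    moreover have "q \<noteq> 1" using q dl_b1[OF m2] by auto
    ultimately have "2 \<le> q" "q \<le> m" "q \<in> T" using q(1) T by auto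
    then have "x = rot q" using q(2) dl_b_ge2 unfolding rot_def by simp
    then show "x \<in> rot ` (T - {1})" using \<open>q \<in> T\<close> \<open>2 \<le> q\<close> by auto
  next
    fix x assume "x \<in> rot ` (T - {1})"
    then obtain q where q: "q \<in> T" "q \<noteq> 1" "x = rot q" by blast
    then have "2 \<le> q" "q \<le> m" using T by auto
    then have "dl q b = x" "x \<noteq> Suc m" using q dl_b_ge2 unfolding rot_def by auto
    then show "x \<in> (\<lambda>q. dl q b) ` insert 0 T - {Suc m}" using q(1) by force
  qed
  show ?thesis unfolding St_def stepS_def img using ne by simp
qed

definition rotk :: "nat \<Rightarrow> nat \<Rightarrow> nat" where "rotk s p = 2 + (p - 2 + s) mod (m - 1)"

lemma rotk_in: "2 \<le> m \<Longrightarrow> rotk s p \<in> {2..m}"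
proof -
  assume m2: "2 \<le> m"
  have h: "(p - 2 + s) mod (m - 1) < m - 1" using m2 by simp
  show ?thesis unfolding rotk_def atLeastAtMost_iff using m2 h by linarith
qed

lemma rotk_0: "2 \<le> m \<Longrightarrow> p \<in> {2..m} \<Longrightarrow> rotk 0 p = p"
  unfolding rotk_def by auto

lemma rotk_add: "2 \<le> m \<Longrightarrow> rotk t (rotk s p) = rotk (s + t) p"
  unfolding rotk_def by (simp add: mod_add_left_eq add.assoc)

lemma rotk_mult: "2 \<le> m \<Longrightarrow> p \<in> {2..m} \<Longrightarrow> rotk ((m - 1) * t) p = p"
proof -
  assume m2: "2 \<le> m" and p: "p \<in> {2..m}"
  have "(p - 2 + (m - 1) * t) mod (m - 1) = (p - 2) mod (m - 1)" by simp
  also have "\<dots> = p - 2" using p m2 by auto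
  finally have h: "(p - 2 + (m - 1) * t) mod (m - 1) = p - 2" .
  show ?thesis unfolding rotk_def h using p unfolding atLeastAtMost_iff by arith
qed

lemma rotk_Suc: "2 \<le> m \<Longrightarrow> rotk (Suc s) p = rot (rotk s p)"
proof -
  assume m2: "2 \<le> m"
  define r where "r = (p - 2 + s) mod (m - 1)"
  have r: "r < m - 1" unfolding r_def using m2 by simp
  have "rotk (Suc s) p = 2 + Suc (p - 2 + s) mod (m - 1)" unfolding rotk_def by simp
  also have "Suc (p - 2 + s) mod (m - 1) = (if Suc r = m - 1 then 0 else Suc r)"
    unfolding r_def by (rule mod_Suc)
  finally have e: "rotk (Suc s) p = 2 + (if Suc r = m - 1 then 0 else Suc r)" .
  have "rotk s p = 2 + r" unfolding rotk_def r_def by simp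
  then show ?thesis using e r m2 unfolding rot_def by auto
qed

lemma reach_rotk:
  assumes m2: "2 \<le> m" and T: "T \<subseteq> {2..m}" "T \<noteq> {}" and R: "reach (insert 0 T)"
  shows "reach (insert 0 (rotk s ` T))"
proof (induction s)
  case 0
  have "rotk 0 ` T = (\<lambda>p. p) ` T"
  proof (rule image_cong[OF refl])
    fix p assume "p \<in> T" then show "rotk 0 p = p" using rotk_0[OF m2] T by blast
  qed
  then have "rotk 0 ` T = T" by simp
  then show ?case using R by simp
next
  case (Suc s)
  have sub: "rotk s ` T \<subseteq> {1..m}"
  proof
    fix x assume "x \<in> rotk s ` T"
    then obtain p where "x = rotk s p" by blast
    then show "x \<in> {1..m}" using rotk_in[OF m2, of s p] by simp
  qed
  have n1: "1 \<notin> rotk s ` T"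
  proof
    assume "1 \<in> rotk s ` T"
    then obtain p where "1 = rotk s p" by blast
    then show False using rotk_in[OF m2, of s p] by simp
  qed
  have ne: "rotk s ` T - {1} \<noteq> {}" using T(2) n1 by auto
  have "St (insert 0 (rotk s ` T)) b = insert 0 (rot ` (rotk s ` T - {1}))" by (rule St_b[OF m2 sub ne])
  also have "rotk s ` T - {1} = rotk s ` T" using n1 by simp
  also have "rot ` (rotk s ` T) = rotk (Suc s) ` T" using rotk_Suc[OF m2] by (simp add: image_image)
  finally show ?case using reach_step[OF Suc.IH, of b] by simp
qed

lemma reach_unrot:
  assumes m2: "2 \<le> m" and T: "T \<subseteq> {2..m}" "T \<noteq> {}" and R: "reach (insert 0 (rotk s ` T))"
  shows "reach (insert 0 T)"
proof -
  have T': "rotk s ` T \<subseteq> {2..m}" "rotk s ` T \<noteq> {}" using rotk_in[OF m2] T by auto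
  have "reach (insert 0 (rotk ((m - 2) * s) ` (rotk s ` T)))" by (rule reach_rotk[OF m2 T' R])
  also have "rotk ((m - 2) * s) ` (rotk s ` T) = T"
  proof -
    have "rotk ((m - 2) * s) (rotk s p) = p" if "p \<in> T" for p
    proof -
      have "rotk ((m - 2) * s) (rotk s p) = rotk (s + (m - 2) * s) p" by (rule rotk_add[OF m2])
      also have "s + (m - 2) * s = (m - 1) * s"
      proof -
        have "m - 1 = Suc (m - 2)" using m2 by simp
        then show ?thesis by simp
      qed
      also have "rotk ((m - 1) * s) p = p" using rotk_mult[OF m2] that T by auto
      finally show ?thesis .
    qed
    then show ?thesis by (simp add: image_image)
  qed
  finally show ?thesis .
qed

end

context F1
begin

lemma rotk_inv: "2 \<le> m \<Longrightarrow> p \<in> {2..m} \<Longrightarrow> rotk ((m - 2) * s) (rotk s p) = p"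
proof -
  assume m2: "2 \<le> m" and p: "p \<in> {2..m}"
  have "rotk ((m - 2) * s) (rotk s p) = rotk (s + (m - 2) * s) p" by (rule rotk_add[OF m2])
  also have "s + (m - 2) * s = (m - 1) * s"
  proof -
    have "m - 1 = Suc (m - 2)" using m2 by simp
    then show ?thesis by simp
  qed
  also have "rotk ((m - 1) * s) p = p" using rotk_mult[OF m2 p] .
  finally show ?thesis .
qed

lemma dec:
  assumes "T \<subseteq> {3..m}"
  shows "Suc ` ((\<lambda>q. q - 1) ` T) = T" "(\<lambda>q. q - 1) ` T \<subseteq> {2..m}" "m \<notin> (\<lambda>q. q - 1) ` T"
    "card ((\<lambda>q. q - 1) ` T) = card T"
proof -
  have "Suc ` ((\<lambda>q. q - 1) ` T) = (\<lambda>q. Suc (q - 1)) ` T" by (simp add: image_image)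
  also have "\<dots> = (\<lambda>q. q) ` T"
  proof (rule image_cong[OF refl])
    fix q assume "q \<in> T" then show "Suc (q - 1) = q" using assms by auto
  qed
  finally show "Suc ` ((\<lambda>q. q - 1) ` T) = T" by simp
  show "(\<lambda>q. q - 1) ` T \<subseteq> {2..m}"
  proof
    fix x assume "x \<in> (\<lambda>q. q - 1) ` T"
    then obtain q where q: "q \<in> T" "x = q - 1" by blast
    then have "3 \<le> q" "q \<le> m" using assms by auto
    then show "x \<in> {2..m}" unfolding q(2) atLeastAtMost_iff by arith
  qed
  show "m \<notin> (\<lambda>q. q - 1) ` T"
  proof
    assume "m \<in> (\<lambda>q. q - 1) ` T"
    then obtain q where q: "q \<in> T" "m = q - 1" by blast
    then have "q \<in> {3..m}" using assms by blast
    then show False using q(2) unfolding atLeastAtMost_iff by arith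
  qed
  have "inj_on (\<lambda>q. q - 1) T"
  proof (rule inj_onI)
    fix x y assume xy: "x \<in> T" "y \<in> T" "x - 1 = y - 1"
    then have "x \<in> {3..m}" "y \<in> {3..m}" using assms by blast+
    then show "x = y" using xy(3) unfolding atLeastAtMost_iff by arith
  qed
  then show "card ((\<lambda>q. q - 1) ` T) = card T" by (rule card_image)
qed

lemma St_a2:
  assumes m2: "2 \<le> m" and Y: "Y \<subseteq> {2..m}" "m \<notin> Y"
  shows "St (insert 0 (insert 1 Y)) a = insert 0 (insert 1 (insert 2 (Suc ` Y)))"
proof -
  have "insert 1 Y \<subseteq> {1..m}" using Y m2 by auto
  then have "St (insert 0 (insert 1 Y)) a = insert 0 (insert 1 (Suc ` (insert 1 Y - {m})))"
    using St_a m2 by simp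
  also have "insert 1 Y - {m} = insert 1 Y" using Y m2 by auto
  finally show ?thesis by (simp add: numeral_2_eq_2)
qed

lemma St_a1:
  assumes m2: "2 \<le> m" and Y: "Y \<subseteq> {2..m}" "m \<notin> Y"
  shows "St (insert 0 Y) a = insert 0 (insert 1 (Suc ` Y))"
proof -
  have "Y \<subseteq> {1..m}" using Y by auto
  then have "St (insert 0 Y) a = insert 0 (insert 1 (Suc ` (Y - {m})))"
    using St_a m2 by simp
  also have "Y - {m} = Y" using Y by auto
  finally show ?thesis .
qed

lemma reach_A:
  assumes m1: "1 \<le> m"
  shows "\<forall>T. T \<subseteq> {2..m} \<and> card T = k \<longrightarrow> reach (insert 0 T) \<and> reach (insert 0 (insert 1 T))"
proof (induction k)
  case 0
  show ?case
  proof (intro allI impI)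
    fix T assume T: "T \<subseteq> {2..m} \<and> card T = 0"
    then have "finite T" using finite_subset by blast
    then have "T = {}" using T by simp
    have "St (insert 0 {}) a = insert 0 (insert 1 (Suc ` ({} - {m})))" using St_a[OF m1] by blast
    then have "St {0} a = {0, 1}" by simp
    then have "reach {0, 1}" using reach_step[OF reach_zero, of a] by simp
    then show "reach (insert 0 T) \<and> reach (insert 0 (insert 1 T))" using \<open>T = {}\<close> reach_zero by simp
  qed
next
  case (Suc k)
  have part1: "reach (insert 0 T)" if T: "T \<subseteq> {2..m}" "card T = Suc k" for T
  proof -
    have finT: "finite T" using T finite_subset by blast
    then have "T \<noteq> {}" using T by auto
    then obtain t where t: "t \<in> T" by blast
    then have m2: "2 \<le> m" and t2: "2 \<le> t" "t \<le> m" using T by auto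
    define s where "s = (m - 1) - (t - 2)"
    have rt: "rotk s t = 2"
    proof -
      have "t - 2 + s = m - 1" unfolding s_def using t2 m2 by simp
      then show ?thesis unfolding rotk_def by simp
    qed
    define T2 where "T2 = rotk s ` T"
    have T2s: "T2 \<subseteq> {2..m}" unfolding T2_def using rotk_in[OF m2] by blast
    have two: "2 \<in> T2" unfolding T2_def using rt t by force
    have injr: "inj_on (rotk s) T"
    proof (rule inj_onI)
      fix x y assume xy: "x \<in> T" "y \<in> T" "rotk s x = rotk s y"
      then have "x \<in> {2..m}" "y \<in> {2..m}" using T by auto
      then have "x = rotk ((m - 2) * s) (rotk s x)" "y = rotk ((m - 2) * s) (rotk s y)"
        using rotk_inv[OF m2] by auto
      then show "x = y" using xy(3) by simp
    qed
    have cT2: "card T2 = Suc k" unfolding T2_def using card_image[OF injr] T by simp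
    define Y where "Y = (\<lambda>q. q - 1) ` (T2 - {2})"
    have T23: "T2 - {2} \<subseteq> {3..m}" using T2s by auto
    note d = dec[OF T23]
    have finT2: "finite T2" using T2s finite_subset by blast
    have cY: "card Y = k" unfolding Y_def d(4) using cT2 two finT2 by simp
    have Ys: "Y \<subseteq> {2..m}" "m \<notin> Y" unfolding Y_def using d by auto
    have "reach (insert 0 (insert 1 Y))" using Suc.IH Ys cY by blast
    then have "reach (St (insert 0 (insert 1 Y)) a)" by (rule reach_step)
    also have "St (insert 0 (insert 1 Y)) a = insert 0 (insert 1 (insert 2 (Suc ` Y)))"
      by (rule St_a2[OF m2 Ys])
    also have "insert 2 (Suc ` Y) = T2" unfolding Y_def d(1) using two by auto
    finally have r1: "reach (insert 0 (insert 1 T2))" .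
    have s1: "insert 1 T2 \<subseteq> {1..m}" using T2s m2 by auto
    have n1: "1 \<notin> T2" using T2s by auto
    have s2: "insert 1 T2 - {1} \<noteq> {}" using two by auto
    have "reach (St (insert 0 (insert 1 T2)) b)" using reach_step[OF r1] .
    also have "St (insert 0 (insert 1 T2)) b = insert 0 (rot ` (insert 1 T2 - {1}))"
      by (rule St_b[OF m2 s1 s2])
    also have "insert 1 T2 - {1} = T2" using n1 by auto
    also have "rot ` T2 = rotk (Suc s) ` T" unfolding T2_def using rotk_Suc[OF m2] by (simp add: image_image)
    finally have "reach (insert 0 (rotk (Suc s) ` T))" .
    then show ?thesis using reach_unrot[OF m2 T(1) \<open>T \<noteq> {}\<close>] by blast
  qed
  show ?case
  proof (intro allI impI conjI)
    fix T assume T: "T \<subseteq> {2..m} \<and> card T = Suc k"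
    show "reach (insert 0 T)" using part1 T by blast
    have finT: "finite T" using T finite_subset by blast
    then have "T \<noteq> {}" using T by auto
    then obtain t where t: "t \<in> T" by blast
    then have m2: "2 \<le> m" using T by auto
    show "reach (insert 0 (insert 1 T))"
    proof (cases "2 \<in> T")
      case True
      define Y where "Y = (\<lambda>q. q - 1) ` (T - {2})"
      have T3: "T - {2} \<subseteq> {3..m}" using T by auto
      note d = dec[OF T3]
      have cY: "card Y = k" unfolding Y_def d(4) using T True finT by simp
      have Ys: "Y \<subseteq> {2..m}" "m \<notin> Y" unfolding Y_def using d by auto
      have "reach (insert 0 (insert 1 Y))" using Suc.IH Ys cY by blast
      then have "reach (St (insert 0 (insert 1 Y)) a)" by (rule reach_step)
      also have "St (insert 0 (insert 1 Y)) a = insert 0 (insert 1 (insert 2 (Suc ` Y)))"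
        by (rule St_a2[OF m2 Ys])
      also have "insert 2 (Suc ` Y) = T" unfolding Y_def d(1) using True by auto
      finally show ?thesis .
    next
      case False
      define Y where "Y = (\<lambda>q. q - 1) ` T"
      have T3: "T \<subseteq> {3..m}"
      proof
        fix x assume "x \<in> T"
        then have "x \<in> {2..m}" "x \<noteq> 2" using T False by blast+
        then show "x \<in> {3..m}" by auto
      qed
      note d = dec[OF T3]
      have cY: "card Y = Suc k" unfolding Y_def d(4) using T by simp
      have Ys: "Y \<subseteq> {2..m}" "m \<notin> Y" unfolding Y_def using d by auto
      have "reach (insert 0 Y)" using part1 Ys cY by blast
      then have "reach (St (insert 0 Y) a)" by (rule reach_step)
      also have "St (insert 0 Y) a = insert 0 (insert 1 (Suc ` Y))" by (rule St_a1[OF m2 Ys])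
      also have "Suc ` Y = T" unfolding Y_def d(1) ..
      finally show ?thesis .
    qed
  qed
qed

lemma reach_all: "T \<subseteq> {1..m} \<Longrightarrow> reach (insert 0 T)"
proof (cases "m = 0")
  case True
  assume "T \<subseteq> {1..m}"
  then have "T = {}" using True by auto
  then show ?thesis using reach_zero by simp
next
  case False
  assume T: "T \<subseteq> {1..m}"
  have m1: "1 \<le> m" using False by simp
  have T': "T - {1} \<subseteq> {2..m}" using T by auto
  have r: "reach (insert 0 (T - {1})) \<and> reach (insert 0 (insert 1 (T - {1})))"
    using reach_A[OF m1, of "card (T - {1})"] T' by blast
  show ?thesis
  proof (cases "1 \<in> T")
    case True
    then have "insert 1 (T - {1}) = T" by auto
    then show ?thesis using r by simp
  next
    case False
    then have "T - {1} = T" by simp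
    then show ?thesis using r by simp
  qed
qed

lemma reach_empty: "reach {}"
proof -
  have "St {0} b = {}" unfolding St_def stepS_def using dl_b0 by simp
  then show ?thesis using reach_step[OF reach_zero, of b] by simp
qed

lemma Reach_eq: "{foldl St {0} w | w. True} = E"
proof
  show "{foldl St {0} w | w. True} \<subseteq> E" using foldl_E[OF zero_E] by blast
  show "E \<subseteq> {foldl St {0} w | w. True}"
  proof
    fix S assume "S \<in> E"
    then have "reach S" unfolding E_def using reach_all reach_empty by auto
    then show "S \<in> {foldl St {0} w | w. True}" unfolding reach_def by blast
  qed
qed

lemma card_E: "card E = 2 ^ m + 1"
proof -
  have inj: "inj_on (insert (0::nat)) (Pow {1..m})"
  proof (rule inj_onI)
    fix A B assume "A \<in> Pow {1..m}" "B \<in> Pow {1..m}" "insert 0 A = insert (0::nat) B"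
    then show "A = B" by (metis Diff_insert_absorb PowD atLeastAtMost_iff not_one_le_zero subsetD)
  qed
  have "card (insert 0 ` Pow {1..m}) = 2 ^ m" using card_image[OF inj] by (simp add: card_Pow)
  moreover have "{} \<notin> insert 0 ` Pow {1..m}" by auto
  moreover have "finite (insert 0 ` Pow {1..m})" by simp
  ultimately show ?thesis unfolding E_def by simp
qed

lemma star_LF_kappa: "kappa (kstar LF) = 2 ^ m + 1"
proof -
  have "kappa (kstar LF) = card E" unfolding star_LF
    by (rule dfa_kappa[OF langS_inj]) (rule Reach_eq[symmetric])
  then show ?thesis using card_E by simp
qed

end

lemma subseq_set: "subseq u x \<Longrightarrow> set u \<subseteq> set x"
proof
  fix c assume su: "subseq u x" and c: "c \<in> set u"
  obtain y where "y \<in> set x" "c = y" by (rule list_emb_set[OF su c])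
  then show "c \<in> set x" by simp
qed

locale AB =
  fixes a b :: "'a::finite"
  assumes ab: "a \<noteq> b"
begin

definition d1 :: "nat \<Rightarrow> nat \<Rightarrow> 'a \<Rightarrow> nat" where
  "d1 k q c = (if c = a \<and> q < k then Suc q else Suc k)"

definition L1 :: "nat \<Rightarrow> 'a list set" where
  "L1 k = {x. foldl (d1 k) 0 x \<in> {..k}}"

lemma foldl_d1: "q \<le> Suc k \<Longrightarrow> foldl (d1 k) q x =
   (if q \<le> k \<and> set x \<subseteq> {a} \<and> q + length x \<le> k then q + length x else Suc k)"
proof (induction x arbitrary: q)
  case Nil then show ?case by auto
next
  case (Cons c x)
  show ?case
  proof (cases "c = a \<and> q < k")
    case True
    then have "d1 k q c = Suc q" unfolding d1_def by simp
    then have "foldl (d1 k) q (c # x) = foldl (d1 k) (Suc q) x" by simp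
    also have "\<dots> = (if Suc q \<le> k \<and> set x \<subseteq> {a} \<and> Suc q + length x \<le> k then Suc q + length x else Suc k)"
      using Cons.IH[of "Suc q"] True by simp
    also have "\<dots> = (if q \<le> k \<and> set (c # x) \<subseteq> {a} \<and> q + length (c # x) \<le> k then q + length (c # x) else Suc k)"
      using True by simp
    finally show ?thesis .
  next
    case False
    then have d: "d1 k q c = Suc k" unfolding d1_def by auto
    have "foldl (d1 k) (Suc k) x = Suc k" using Cons.IH[of "Suc k"] by simp
    then have l: "foldl (d1 k) q (c # x) = Suc k" using d by simp
    have "\<not> (q \<le> k \<and> set (c # x) \<subseteq> {a} \<and> q + length (c # x) \<le> k)" using False by auto
    then show ?thesis unfolding l by simp
  qed
qed

lemma L1_mem: "x \<in> L1 k \<longleftrightarrow> set x \<subseteq> {a} \<and> length x \<le> k"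
proof (cases "set x \<subseteq> {a} \<and> length x \<le> k")
  case True
  then have "foldl (d1 k) 0 x = length x" using foldl_d1[of 0 k x] by simp
  then show ?thesis unfolding L1_def using True by simp
next
  case False
  then have "foldl (d1 k) 0 x = Suc k" using foldl_d1[of 0 k x] by auto
  then show ?thesis unfolding L1_def using False by simp
qed

lemma L1_reach: "{foldl (d1 k) 0 w | w. True} = {..Suc k}"
proof
  show "{foldl (d1 k) 0 w | w. True} \<subseteq> {..Suc k}"
  proof
    fix q assume "q \<in> {foldl (d1 k) 0 w | w. True}"
    then obtain w where "q = foldl (d1 k) 0 w" by blast
    then show "q \<in> {..Suc k}" using foldl_d1[of 0 k w] by (auto split: if_splits)
  qed
  show "{..Suc k} \<subseteq> {foldl (d1 k) 0 w | w. True}"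
  proof
    fix q assume q: "q \<in> {..Suc k}"
    have "q = foldl (d1 k) 0 (replicate q a)" using foldl_d1[of 0 k "replicate q a"] q
      by (cases "q \<le> k") auto
    then show "q \<in> {foldl (d1 k) 0 w | w. True}" by blast
  qed
qed

lemma L1_regular: "regular (L1 k)"
  unfolding L1_def by (rule dfa_regular) (unfold L1_reach, simp)

lemma L1_kappa: "kappa (L1 k) = k + 2"
proof -
  have mem: "replicate j a \<in> {x. foldl (d1 k) p x \<in> {..k}} \<longleftrightarrow> p + j \<le> k" if "p \<le> Suc k" for p j
    using foldl_d1[OF that, of "replicate j a"] by auto
  have inj: "inj_on (\<lambda>q. {x. foldl (d1 k) q x \<in> {..k}}) {..Suc k}"
  proof (rule inj_onI)
    fix q q' assume q: "q \<in> {..Suc k}" and q': "q' \<in> {..Suc k}"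
      and eq: "{x. foldl (d1 k) q x \<in> {..k}} = {x. foldl (d1 k) q' x \<in> {..k}}"
    have e: "p + j \<le> k \<longleftrightarrow> p' + j \<le> k" if "p = q \<and> p' = q'" for p p' j
      using eq mem[of q j] mem[of q' j] q q' that by auto
    show "q = q'" using e[of q q' "k - q"] e[of q q' "k - q'"] q q' by auto
  qed
  have "kappa (L1 k) = card {..Suc k}" unfolding L1_def
    by (rule dfa_kappa[OF inj]) (rule L1_reach[symmetric])
  then show ?thesis by simp
qed

lemma L1_subword: "subword_closed (L1 k)"
  unfolding subword_closed_def
proof (intro ballI allI impI)
  fix w u assume "w \<in> L1 k" "subseq u w"
  then have "set w \<subseteq> {a}" "length w \<le> k" "set u \<subseteq> set w" "length u \<le> length w"
    unfolding L1_mem using subseq_set list_emb_length by blast+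
  then show "u \<in> L1 k" unfolding L1_mem by simp
qed

definition Astar :: "'a list set" where "Astar = {x. set x \<subseteq> {a}}"

lemma kstar_L1: "1 \<le> k \<Longrightarrow> kstar (L1 k) = Astar"
proof
  show "kstar (L1 k) \<subseteq> Astar"
  proof
    fix x assume "x \<in> kstar (L1 k)" then show "x \<in> Astar"
    proof (induction x rule: kstar_induct)
      case Nil then show ?case by (simp add: Astar_def)
    next
      case (App u v)
      then have "set u \<subseteq> {a}" "set v \<subseteq> {a}" unfolding L1_mem Astar_def by blast+
      then show ?case unfolding Astar_def by simp
    qed
  qed
next
  assume k: "1 \<le> k"
  show "Astar \<subseteq> kstar (L1 k)"
  proof
    fix x assume "x \<in> Astar" then show "x \<in> kstar (L1 k)"
    proof (induction x)
      case (Cons c x)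
      then have "c = a" "x \<in> Astar" unfolding Astar_def by auto
      then have "[c] \<in> L1 k" "x \<in> kstar (L1 k)" using k Cons.IH unfolding L1_mem by auto
      then show ?case using kstar_cons[of "[c]" "L1 k" x] by simp
    qed simp
  qed
qed

definition db :: "bool \<Rightarrow> 'a \<Rightarrow> bool" where "db q c = (q \<and> c = a)"

lemma foldl_db: "foldl db q x = (q \<and> set x \<subseteq> {a})"
proof (induction x arbitrary: q)
  case Nil then show ?case by simp
next
  case (Cons c x)
  have "foldl db q (c # x) = foldl db (q \<and> c = a) x" by (simp add: db_def)
  also have "\<dots> = ((q \<and> c = a) \<and> set x \<subseteq> {a})" by (rule Cons.IH)
  finally show ?case by auto
qed

lemma Astar_kappa: "kappa Astar = 2"
proof -
  have eq: "Astar = {x. foldl db True x \<in> {True}}" unfolding Astar_def foldl_db by simp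
  have R: "{foldl db True w | w. True} = UNIV"
  proof -
    have "foldl db True [] = True" "foldl db True [b] = False" using ab by (auto simp: db_def)
    then have "True \<in> {foldl db True w | w. True}" "False \<in> {foldl db True w | w. True}" by blast+
    then show ?thesis using UNIV_bool by auto
  qed
  have inj: "inj_on (\<lambda>q. {x. foldl db q x \<in> {True}}) UNIV"
  proof (rule inj_onI)
    fix q q' assume "{x. foldl db q x \<in> {True}} = {x. foldl db q' x \<in> {True}}"
    then have "[] \<in> {x. foldl db q x \<in> {True}} \<longleftrightarrow> [] \<in> {x. foldl db q' x \<in> {True}}" by simp
    then show "q = q'" by simp
  qed
  have "kappa Astar = card (UNIV :: bool set)" unfolding eq
    by (rule dfa_kappa[OF inj]) (rule R[symmetric])
  then show ?thesis by simp
qed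

end

context AB
begin

definition d2 :: "nat \<Rightarrow> nat \<Rightarrow> 'a \<Rightarrow> nat" where
  "d2 m q c = (if m < q then Suc m else if c = a then q - 1
     else if c = b then (if q = 0 then m else Suc m) else Suc m)"

definition K :: "nat \<Rightarrow> 'a list set" where "K m = {x. foldl (d2 m) 0 x \<in> {0}}"

lemma d2_dead[simp]: "d2 m (Suc m) c = Suc m" unfolding d2_def by simp

lemma foldl_d2_dead[simp]: "foldl (d2 m) (Suc m) x = Suc m"
  by (induction x) simp_all

lemma d2_le: "d2 m q c \<le> Suc m" unfolding d2_def by auto

lemma foldl_d2_le: "q \<le> Suc m \<Longrightarrow> foldl (d2 m) q x \<le> Suc m"
  by (induction x arbitrary: q) (simp_all add: d2_le)

lemma d2_a: "q \<le> m \<Longrightarrow> d2 m q a = q - 1" unfolding d2_def by simp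

lemma d2_b0: "d2 m 0 b = m" unfolding d2_def using ab by simp

lemma d2_bpos: "0 < q \<Longrightarrow> d2 m q b = Suc m" unfolding d2_def using ab by simp

lemma foldl_as2: "q \<le> m \<Longrightarrow> foldl (d2 m) q (replicate j a) = q - j"
proof (induction j arbitrary: q)
  case 0 then show ?case by simp
next
  case (Suc j)
  have "foldl (d2 m) q (replicate (Suc j) a) = foldl (d2 m) (q - 1) (replicate j a)"
    using d2_a[OF Suc.prems] by simp
  also have "\<dots> = q - 1 - j" using Suc.IH[of "q - 1"] Suc.prems by simp
  finally show ?case by simp
qed

lemma K_reach: "1 \<le> m \<Longrightarrow> {foldl (d2 m) 0 w | w. True} = {..Suc m}"
proof
  show "{foldl (d2 m) 0 w | w. True} \<subseteq> {..Suc m}"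
  proof
    fix q assume "q \<in> {foldl (d2 m) 0 w | w. True}"
    then obtain w where "q = foldl (d2 m) 0 w" by blast
    then show "q \<in> {..Suc m}" using foldl_d2_le[of 0 m w] by simp
  qed
next
  assume m1: "1 \<le> m"
  show "{..Suc m} \<subseteq> {foldl (d2 m) 0 w | w. True}"
  proof
    fix q assume q: "q \<in> {..Suc m}"
    show "q \<in> {foldl (d2 m) 0 w | w. True}"
    proof (cases "q = Suc m")
      case True
      have "foldl (d2 m) 0 [b, b] = Suc m" using d2_b0 d2_bpos m1 by simp
      then have "q = foldl (d2 m) 0 [b, b]" using True by simp
      then show ?thesis by blast
    next
      case False
      then have "q \<le> m" using q by simp
      have "foldl (d2 m) 0 (b # replicate (m - q) a) = foldl (d2 m) m (replicate (m - q) a)"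
        using d2_b0 by simp
      also have "\<dots> = q" using foldl_as2[of m m "m - q"] \<open>q \<le> m\<close> by simp
      finally have e: "foldl (d2 m) 0 (b # replicate (m - q) a) = q" .
      show ?thesis by (intro CollectI exI[of _ "b # replicate (m - q) a"]) (simp only: e simp_thms)
    qed
  qed
qed

lemma K_regular: "1 \<le> m \<Longrightarrow> regular (K m)"
  unfolding K_def by (rule dfa_regular) (unfold K_reach, simp)

lemma K_kappa: "1 \<le> m \<Longrightarrow> kappa (K m) = m + 2"
proof -
  assume m1: "1 \<le> m"
  have mem: "replicate j a \<in> {x. foldl (d2 m) p x \<in> {0}} \<longleftrightarrow> p \<le> j" if "p \<le> m" for p j
    using foldl_as2[OF that, of j] by auto
  have memD: "x \<notin> {x. foldl (d2 m) (Suc m) x \<in> {0}}" for x by simp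
  have inj: "inj_on (\<lambda>q. {x. foldl (d2 m) q x \<in> {0}}) {..Suc m}"
  proof (rule inj_onI)
    fix q q' assume q: "q \<in> {..Suc m}" and q': "q' \<in> {..Suc m}"
      and eq: "{x. foldl (d2 m) q x \<in> {0}} = {x. foldl (d2 m) q' x \<in> {0}}"
    show "q = q'"
    proof (cases "q \<le> m")
      case True
      have "replicate q a \<in> {x. foldl (d2 m) q x \<in> {0}}" using mem[OF True] by simp
      then have A: "replicate q a \<in> {x. foldl (d2 m) q' x \<in> {0}}" unfolding eq .
      show ?thesis
      proof (cases "q' \<le> m")
        case True
        have "replicate q' a \<in> {x. foldl (d2 m) q' x \<in> {0}}" using mem[OF True] by simp
        then have "replicate q' a \<in> {x. foldl (d2 m) q x \<in> {0}}" unfolding eq .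
        then have "q \<le> q'" using mem[OF \<open>q \<le> m\<close>] by simp
        moreover have "q' \<le> q" using A mem[OF True] by simp
        ultimately show ?thesis by simp
      next
        case False
        then have "q' = Suc m" using q' by simp
        then show ?thesis using A by simp
      qed
    next
      case False
      then have qs: "q = Suc m" using q by simp
      show ?thesis
      proof (cases "q' \<le> m")
        case True
        have "replicate q' a \<in> {x. foldl (d2 m) q' x \<in> {0}}" using mem[OF True] by simp
        then have "replicate q' a \<in> {x. foldl (d2 m) q x \<in> {0}}" unfolding eq .
        then show ?thesis using qs by simp
      next
        case False then show ?thesis using q' qs by simp
      qed
    qed
  qed
  have "kappa (K m) = card {..Suc m}" unfolding K_def
    by (rule dfa_kappa[OF inj]) (rule K_reach[OF m1, symmetric])
  then show ?thesis by simp
qed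

lemma K_app: "u \<in> K m \<Longrightarrow> v \<in> K m \<Longrightarrow> u @ v \<in> K m"
  unfolding K_def by simp

lemma K_star: "kstar (K m) = K m"
  by (rule kstar_closed_eq) (auto simp: K_def)

lemma d2_mono: "q \<le> q' \<Longrightarrow> q' \<le> Suc m \<Longrightarrow> d2 m q c \<le> d2 m q' c"
  unfolding d2_def by auto

lemma foldl_d2_mono: "q' \<le> q \<Longrightarrow> q \<le> Suc m \<Longrightarrow> foldl (d2 m) q' x \<le> foldl (d2 m) q x"
proof (induction x arbitrary: q q')
  case Nil then show ?case by simp
next
  case (Cons c x)
  have "d2 m q' c \<le> d2 m q c" using d2_mono Cons.prems by blast
  moreover have "d2 m q c \<le> Suc m" by (rule d2_le)
  ultimately show ?case using Cons.IH by simp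
qed

lemma K_suffix: "suffix_closed (K m)"
  unfolding suffix_closed_def
proof (intro ballI allI impI)
  fix w u assume w: "w \<in> K m" and "suffix u w"
  then obtain v where wv: "w = v @ u" unfolding suffix_def by blast
  define r where "r = foldl (d2 m) 0 v"
  have r: "r \<le> Suc m" unfolding r_def using foldl_d2_le[of 0 m v] by simp
  have fr: "foldl (d2 m) r u = 0" using w wv unfolding K_def r_def by simp
  have "foldl (d2 m) 0 u \<le> foldl (d2 m) r u" using foldl_d2_mono[of 0 r m u] r by simp
  then have "foldl (d2 m) 0 u \<in> {0}" using fr by simp
  then show "u \<in> K m" unfolding K_def by simp
qed

end

context AB
begin

definition d3 :: "nat \<Rightarrow> nat \<Rightarrow> 'a \<Rightarrow> nat" where
  "d3 m q c = (if q = Suc (Suc m) then (if c = a then Suc (Suc m) else if c = b then m else Suc m)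
     else if m < q then Suc m else if c = a then q - 1 else Suc m)"

definition L3 :: "nat \<Rightarrow> 'a list set" where
  "L3 m = {x. foldl (d3 m) (Suc (Suc m)) x \<in> {0, Suc (Suc m)}}"

lemma d3_dead[simp]: "d3 m (Suc m) c = Suc m" unfolding d3_def by simp

lemma foldl_d3_dead[simp]: "foldl (d3 m) (Suc m) x = Suc m"
  by (induction x) simp_all

lemma d3_le: "d3 m q c \<le> Suc (Suc m)" unfolding d3_def by auto

lemma foldl_d3_le: "q \<le> Suc (Suc m) \<Longrightarrow> foldl (d3 m) q x \<le> Suc (Suc m)"
  by (induction x arbitrary: q) (simp_all add: d3_le)

lemma d3_a: "q \<le> m \<Longrightarrow> d3 m q a = q - 1" unfolding d3_def by simp

lemma d3_nota: "q \<le> Suc m \<Longrightarrow> c \<noteq> a \<Longrightarrow> d3 m q c = Suc m" unfolding d3_def by simp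

lemma d3_Ia: "d3 m (Suc (Suc m)) a = Suc (Suc m)" unfolding d3_def by simp

lemma d3_Ib: "d3 m (Suc (Suc m)) b = m" unfolding d3_def using ab by simp

lemma foldl_as3: "q \<le> m \<Longrightarrow> foldl (d3 m) q (replicate j a) = q - j"
proof (induction j arbitrary: q)
  case 0 then show ?case by simp
next
  case (Suc j)
  have "foldl (d3 m) q (replicate (Suc j) a) = foldl (d3 m) (q - 1) (replicate j a)"
    using d3_a[OF Suc.prems] by simp
  also have "\<dots> = q - 1 - j" using Suc.IH[of "q - 1"] Suc.prems by simp
  finally show ?case by simp
qed

lemma foldl_Ias: "foldl (d3 m) (Suc (Suc m)) (replicate j a) = Suc (Suc m)"
  by (induction j) (simp_all add: d3_Ia)

lemma bam: "foldl (d3 m) (Suc (Suc m)) (b # replicate j a) = m - j"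
  using d3_Ib foldl_as3[of m m j] by simp

lemma L3_reach: "{foldl (d3 m) (Suc (Suc m)) w | w. True} = {..Suc (Suc m)}"
proof
  show "{foldl (d3 m) (Suc (Suc m)) w | w. True} \<subseteq> {..Suc (Suc m)}"
  proof
    fix q assume "q \<in> {foldl (d3 m) (Suc (Suc m)) w | w. True}"
    then obtain w where "q = foldl (d3 m) (Suc (Suc m)) w" by blast
    then show "q \<in> {..Suc (Suc m)}" using foldl_d3_le[of "Suc (Suc m)" m w] by simp
  qed
  show "{..Suc (Suc m)} \<subseteq> {foldl (d3 m) (Suc (Suc m)) w | w. True}"
  proof
    fix q assume q: "q \<in> {..Suc (Suc m)}"
    have "\<exists>w. foldl (d3 m) (Suc (Suc m)) w = q"
    proof -
      consider "q \<le> m" | "q = Suc m" | "q = Suc (Suc m)" using q by fastforce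
      then show ?thesis
      proof cases
        case 1
        then have "foldl (d3 m) (Suc (Suc m)) (b # replicate (m - q) a) = q" using bam by simp
        then show ?thesis by blast
      next
        case 2
        have "foldl (d3 m) (Suc (Suc m)) [b, b] = Suc m" using d3_Ib d3_nota[of m m b] ab by simp
        then show ?thesis using 2 by blast
      next
        case 3
        have "foldl (d3 m) (Suc (Suc m)) [] = Suc (Suc m)" by simp
        then show ?thesis using 3 by blast
      qed
    qed
    then obtain w where "foldl (d3 m) (Suc (Suc m)) w = q" by blast
    then show "q \<in> {foldl (d3 m) (Suc (Suc m)) w | w. True}"
      by (intro CollectI exI[of _ w]) simp
  qed
qed

lemma L3_regular: "regular (L3 m)"
  unfolding L3_def by (rule dfa_regular) (unfold L3_reach, simp)

lemma L3_kappa: "kappa (L3 m) = m + 3"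
proof -
  let ?F = "{0, Suc (Suc m)}"
  have memB: "b # replicate m a \<in> {x. foldl (d3 m) p x \<in> ?F} \<longleftrightarrow> p = Suc (Suc m)" if "p \<le> Suc (Suc m)" for p
  proof (cases "p = Suc (Suc m)")
    case True then show ?thesis using bam[of m m] by simp
  next
    case False
    then have "d3 m p b = Suc m" using that ab d3_nota[of p m b] by simp
    then show ?thesis using False by simp
  qed
  have memA: "replicate j a \<in> {x. foldl (d3 m) p x \<in> ?F} \<longleftrightarrow> p = Suc (Suc m) \<or> (p \<le> m \<and> p \<le> j)"
    if pSS: "p \<le> Suc (Suc m)" for p j
  proof -
    consider "p \<le> m" | "p = Suc m" | "p = Suc (Suc m)" using pSS by fastforce
    then show ?thesis
    proof cases
      case 1 then show ?thesis using foldl_as3[OF 1, of j] by auto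
    next
      case 2
      then have "foldl (d3 m) p (replicate j a) = Suc m" by simp
      then show ?thesis using 2 by simp
    next
      case 3 then show ?thesis using foldl_Ias[of m j] by simp
    qed
  qed
  have inj: "inj_on (\<lambda>q. {x. foldl (d3 m) q x \<in> ?F}) {..Suc (Suc m)}"
  proof (rule inj_onI)
    fix p p' assume p: "p \<in> {..Suc (Suc m)}" and p': "p' \<in> {..Suc (Suc m)}"
      and eq: "{x. foldl (d3 m) p x \<in> ?F} = {x. foldl (d3 m) p' x \<in> ?F}"
    have pp: "p \<le> Suc (Suc m)" "p' \<le> Suc (Suc m)" using p p' by auto
    have eqm: "x \<in> {x. foldl (d3 m) p x \<in> ?F} \<longleftrightarrow> x \<in> {x. foldl (d3 m) p' x \<in> ?F}" for x
      by (simp only: eq)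
    have e1: "p = Suc (Suc m) \<longleftrightarrow> p' = Suc (Suc m)"
      using memB[OF pp(1)] memB[OF pp(2)] eqm[of "b # replicate m a"] by blast
    have e2: "(p = Suc (Suc m) \<or> (p \<le> m \<and> p \<le> j)) \<longleftrightarrow> (p' = Suc (Suc m) \<or> (p' \<le> m \<and> p' \<le> j))" for j
      using memA[OF pp(1), of j] memA[OF pp(2), of j] eqm[of "replicate j a"] by blast
    show "p = p'"
    proof (cases "p = Suc (Suc m)")
      case True then show ?thesis using e1 by simp
    next
      case False
      then have nI: "p \<noteq> Suc (Suc m)" "p' \<noteq> Suc (Suc m)" using e1 by auto
      have e3: "(p \<le> m \<and> p \<le> j) \<longleftrightarrow> (p' \<le> m \<and> p' \<le> j)" for j using e2[of j] nI by simp
      show ?thesis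
      proof (cases "p \<le> m")
        case True
        then have "p' \<le> m" using e3[of m] by simp
        then show ?thesis using e3[of p] e3[of p'] True by auto
      next
        case False
        then have "p' > m" using e3[of m] by auto
        then show ?thesis using False nI pp by auto
      qed
    qed
  qed
  have "kappa (L3 m) = card {..Suc (Suc m)}" unfolding L3_def
    by (rule dfa_kappa[OF inj]) (rule L3_reach[symmetric])
  then show ?thesis by simp
qed

definition S3 :: "nat \<Rightarrow> nat \<Rightarrow> nat \<Rightarrow> bool" where
  "S3 m q q' = (q' = Suc (Suc m) \<or> q = Suc m \<or> (q \<le> m \<and> q' \<le> m \<and> q' \<le> q))"

lemma d3_Iother: "c \<noteq> a \<Longrightarrow> c \<noteq> b \<Longrightarrow> d3 m (Suc (Suc m)) c = Suc m"
  unfolding d3_def by simp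

lemma S3_step: "S3 m q q' \<Longrightarrow> q \<le> Suc (Suc m) \<Longrightarrow> S3 m (d3 m q c) (d3 m q' c)"
proof -
  assume S: "S3 m q q'" and q: "q \<le> Suc (Suc m)"
  show ?thesis
  proof (cases "c = a")
    case True
    show ?thesis
    proof (cases "q' = Suc (Suc m)")
      case True then show ?thesis using \<open>c = a\<close> d3_Ia unfolding S3_def by simp
    next
      case False
      then have "q = Suc m \<or> (q \<le> m \<and> q' \<le> m \<and> q' \<le> q)" using S unfolding S3_def by simp
      then show ?thesis
      proof
        assume "q = Suc m" then show ?thesis unfolding S3_def by simp
      next
        assume h: "q \<le> m \<and> q' \<le> m \<and> q' \<le> q"
        then have "d3 m q c = q - 1" "d3 m q' c = q' - 1" using d3_a \<open>c = a\<close> by auto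
        then show ?thesis using h unfolding S3_def by auto
      qed
    qed
  next
    case False
    show ?thesis
    proof (cases "q = Suc (Suc m)")
      case False
      then have "q \<le> Suc m" using q by simp
      then have "d3 m q c = Suc m" using d3_nota \<open>c \<noteq> a\<close> by blast
      then show ?thesis unfolding S3_def by simp
    next
      case True
      then have "q' = q" using S unfolding S3_def by auto
      show ?thesis
      proof (cases "c = b")
        case True
        then have "d3 m q c = m" using \<open>q = Suc (Suc m)\<close> d3_Ib by simp
        then show ?thesis using \<open>q' = q\<close> unfolding S3_def by simp
      next
        case False
        then have "d3 m q c = Suc m" using \<open>q = Suc (Suc m)\<close> d3_Iother \<open>c \<noteq> a\<close> by simp
        then show ?thesis using \<open>q' = q\<close> unfolding S3_def by simp
      qed
    qed
  qed
qed

lemma S3_lang: "S3 m q q' \<Longrightarrow> q \<le> Suc (Suc m) \<Longrightarrow> foldl (d3 m) q x \<in> {0, Suc (Suc m)} \<Longrightarrow>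
    foldl (d3 m) q' x \<in> {0, Suc (Suc m)}"
proof (induction x arbitrary: q q')
  case Nil
  then show ?case unfolding S3_def by auto
next
  case (Cons c x)
  have "S3 m (d3 m q c) (d3 m q' c)" by (rule S3_step[OF Cons.prems(1,2)])
  moreover have "d3 m q c \<le> Suc (Suc m)" by (rule d3_le)
  ultimately show ?case using Cons.IH Cons.prems(3) by simp
qed

lemma L3_suffix: "suffix_closed (L3 m)"
  unfolding suffix_closed_def
proof (intro ballI allI impI)
  fix w u assume w: "w \<in> L3 m" and "suffix u w"
  then obtain v where wv: "w = v @ u" unfolding suffix_def by blast
  define r where "r = foldl (d3 m) (Suc (Suc m)) v"
  have r: "r \<le> Suc (Suc m)" unfolding r_def using foldl_d3_le[of "Suc (Suc m)" m v] by simp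
  have fr: "foldl (d3 m) r u \<in> {0, Suc (Suc m)}" using w wv unfolding L3_def r_def by simp
  have "S3 m r (Suc (Suc m))" unfolding S3_def by simp
  then have "foldl (d3 m) (Suc (Suc m)) u \<in> {0, Suc (Suc m)}" using S3_lang r fr by blast
  then show "u \<in> L3 m" unfolding L3_def by simp
qed

definition S4 :: "nat \<Rightarrow> nat \<Rightarrow> nat \<Rightarrow> bool" where
  "S4 m p q = ((p = Suc (Suc m) \<and> q = 0) \<or> (p \<le> m \<and> q = p) \<or> p = Suc m)"

lemma S4_step: "S4 m p q \<Longrightarrow> S4 m (d3 m p c) (d2 m q c)"
proof -
  assume "S4 m p q"
  then consider "p = Suc (Suc m)" "q = 0" | "p \<le> m" "q = p" | "p = Suc m" unfolding S4_def by blast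
  then show ?thesis
  proof cases
    case 1
    consider "c = a" | "c = b" | "c \<noteq> a" "c \<noteq> b" by blast
    then show ?thesis
    proof cases
      case 1: 1
      then have "d3 m p c = Suc (Suc m)" "d2 m q c = 0" using d3_Ia d2_a[of 0 m] \<open>p = Suc (Suc m)\<close> \<open>q = 0\<close> by simp_all
      then show ?thesis unfolding S4_def by simp
    next
      case 2
      then have "d3 m p c = m" "d2 m q c = m" using d3_Ib d2_b0 \<open>p = Suc (Suc m)\<close> \<open>q = 0\<close> by simp_all
      then show ?thesis unfolding S4_def by simp
    next
      case 3
      then have "d3 m p c = Suc m" using d3_Iother \<open>p = Suc (Suc m)\<close> by simp
      then show ?thesis unfolding S4_def by simp
    qed
  next
    case 2
    show ?thesis
    proof (cases "c = a")
      case True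
      then have "d3 m p c = p - 1" "d2 m q c = p - 1" using d3_a d2_a \<open>p \<le> m\<close> \<open>q = p\<close> by simp_all
      moreover have "p - 1 \<le> m" using \<open>p \<le> m\<close> by simp
      ultimately show ?thesis unfolding S4_def by simp
    next
      case False
      then have "d3 m p c = Suc m" using d3_nota \<open>p \<le> m\<close> by simp
      then show ?thesis unfolding S4_def by simp
    qed
  next
    case 3
    then show ?thesis unfolding S4_def by simp
  qed
qed

lemma S4_lang: "S4 m p q \<Longrightarrow> foldl (d3 m) p x \<in> {0, Suc (Suc m)} \<Longrightarrow> foldl (d2 m) q x \<in> {0}"
proof (induction x arbitrary: p q)
  case Nil
  then show ?case unfolding S4_def by auto
next
  case (Cons c x)
  then show ?case using S4_step[OF Cons.prems(1), of c] by simp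
qed

lemma L3_sub_K: "L3 m \<subseteq> K m"
proof
  fix x assume "x \<in> L3 m"
  moreover have "S4 m (Suc (Suc m)) 0" unfolding S4_def by simp
  ultimately show "x \<in> K m" unfolding L3_def K_def using S4_lang by blast
qed

lemma decomp2: "q \<le> m \<Longrightarrow> foldl (d2 m) q x = 0 \<Longrightarrow> \<exists>z. x = replicate q a @ z \<and> foldl (d2 m) 0 z = 0"
proof (induction q arbitrary: x)
  case 0 then show ?case by simp
next
  case (Suc q)
  show ?case
  proof (cases x)
    case Nil then show ?thesis using Suc.prems by simp
  next
    case (Cons c x')
    show ?thesis
    proof (cases "c = a")
      case True
      then have "foldl (d2 m) q x' = 0" using Suc.prems Cons d2_a[of "Suc q" m] by simp
      moreover have "q \<le> m" using Suc.prems by simp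
      ultimately obtain z where "x' = replicate q a @ z" "foldl (d2 m) 0 z = 0" using Suc.IH by blast
      then show ?thesis using Cons True by simp
    next
      case False
      then have "d2 m (Suc q) c = Suc m" unfolding d2_def using Suc.prems by auto
      then show ?thesis using Suc.prems Cons by simp
    qed
  qed
qed

lemma K_sub_star: "1 \<le> m \<Longrightarrow> x \<in> K m \<Longrightarrow> x \<in> kstar (L3 m)"
proof (induction "length x" arbitrary: x rule: less_induct)
  case less
  note m1 = less.prems(1)
  show ?case
  proof (cases x)
    case Nil then show ?thesis by simp
  next
    case (Cons c x')
    have fx: "foldl (d2 m) 0 x = 0" using less.prems unfolding K_def by simp
    consider "c = a" | "c = b" | "c \<noteq> a" "c \<noteq> b" by blast
    then show ?thesis
    proof cases
      case 1
      then have "x' \<in> K m" using fx Cons d2_a[of 0 m] unfolding K_def by simp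
      then have "x' \<in> kstar (L3 m)" using less.hyps Cons m1 by simp
      moreover have "[a] \<in> L3 m" unfolding L3_def using d3_Ia by simp
      ultimately show ?thesis using kstar_cons[of "[a]" "L3 m" x'] Cons 1 by simp
    next
      case 2
      then have "foldl (d2 m) m x' = 0" using fx Cons d2_b0 by simp
      then obtain z where z: "x' = replicate m a @ z" "foldl (d2 m) 0 z = 0" using decomp2 by blast
      then have "z \<in> K m" unfolding K_def by simp
      moreover have "length z < length x" using z Cons by simp
      ultimately have "z \<in> kstar (L3 m)" using less.hyps m1 by blast
      moreover have "b # replicate m a \<in> L3 m" unfolding L3_def using bam[of m m] by simp
      ultimately show ?thesis using kstar_cons[of "b # replicate m a" "L3 m" z] Cons 2 z by simp
    next
      case 3
      then have "d2 m 0 c = Suc m" unfolding d2_def by simp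
      then show ?thesis using fx Cons by simp
    qed
  qed
qed

lemma kstar_L3: "1 \<le> m \<Longrightarrow> kstar (L3 m) = K m"
proof
  show "kstar (L3 m) \<subseteq> K m" using kstar_mono[OF L3_sub_K] K_star by simp
  assume "1 \<le> m"
  then show "K m \<subseteq> kstar (L3 m)" using K_sub_star by blast
qed

lemma L3_ne: "1 \<le> m \<Longrightarrow> L3 m \<noteq> kstar (L3 m)"
proof
  assume m1: "1 \<le> m" and eq: "L3 m = kstar (L3 m)"
  define w where "w = b # replicate m a"
  have wK: "w \<in> K m" unfolding K_def w_def using d2_b0 foldl_as2[of m m m] by simp
  have "w @ w \<in> K m" using K_app[OF wK wK] .
  then have "w @ w \<in> L3 m" using eq kstar_L3[OF m1] by simp
  moreover have "foldl (d3 m) (Suc (Suc m)) (w @ w) = Suc m"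
  proof -
    have "foldl (d3 m) (Suc (Suc m)) w = 0" unfolding w_def using bam[of m m] by simp
    moreover have "d3 m 0 b = Suc m" using d3_nota[of 0 m b] ab by simp
    ultimately show ?thesis unfolding w_def by simp
  qed
  ultimately show False unfolding L3_def by simp
qed

end

lemma upper_part:
  fixes L :: "('a::finite) list set"
  shows "(kappa L = 1 \<and> closed_lang L \<longrightarrow> kappa (kstar L) \<le> 2) \<and>
        (\<forall>n. kappa L = n \<and> n \<ge> 2 \<longrightarrow>
           (prefix_closed L \<longrightarrow> kappa (kstar L) \<le> 2 ^ (n - 2) + 1) \<and>
           (suffix_closed L \<longrightarrow>
              (L = kstar L \<longrightarrow> kappa (kstar L) \<le> n) \<and>
              (L \<noteq> kstar L \<longrightarrow> kappa (kstar L) \<le> n - 1)) \<and>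
           (factor_closed L \<or> subword_closed L \<longrightarrow> kappa (kstar L) \<le> 2))"
proof (intro conjI impI allI)
  assume "kappa L = 1 \<and> closed_lang L"
  then show "kappa (kstar L) \<le> 2" using kappa1_bound by blast
next
  fix n assume "kappa L = n \<and> 2 \<le> n" "prefix_closed L"
  then show "kappa (kstar L) \<le> 2 ^ (n - 2) + 1" using prefix_bound by blast
next
  fix n assume "kappa L = n \<and> 2 \<le> n" "suffix_closed L" "L = kstar L"
  then show "kappa (kstar L) \<le> n" using suffix_bound by blast
next
  fix n assume "kappa L = n \<and> 2 \<le> n" "suffix_closed L" "L \<noteq> kstar L"
  then show "kappa (kstar L) \<le> n - 1" using suffix_bound by blast
next
  fix n assume "kappa L = n \<and> 2 \<le> n" "factor_closed L \<or> subword_closed L"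
  then have "factor_closed L" using subword_factor by blast
  then show "kappa (kstar L) \<le> 2" by (rule factor_bound)
qed

lemma two_letters:
  assumes "card (UNIV :: ('a::finite) set) \<ge> 2"
  obtains a b :: "'a::finite" where "a \<noteq> b"
proof -
  obtain x :: 'a where True by simp
  have "\<exists>y::'a. y \<noteq> x"
  proof (rule ccontr)
    assume "\<not> (\<exists>y::'a. y \<noteq> x)"
    then have u: "(UNIV :: 'a set) = {x}" by auto
    have "card (UNIV :: 'a set) = 1" unfolding u by simp
    then show False using assms by simp
  qed
  then show ?thesis using that by blast
qed

lemma LF0_eq:
  assumes "F1 a b"
  shows "F1.LF 0 a b = {[]}"
proof -
  interpret F1 0 a b by (rule assms)
  have "x \<in> LF \<longleftrightarrow> x = []" for x
  proof (cases x)
    case Nil then show ?thesis unfolding LF_def by simp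
  next
    case (Cons c x')
    have "dl 0 c = Suc 0" unfolding dl_def by simp
    then have "foldl dl 0 x = Suc 0" using Cons foldl_dead by simp
    then show ?thesis unfolding LF_def using Cons by simp
  qed
  then show ?thesis by blast
qed

lemma witness_part:
  assumes "card (UNIV :: ('a::finite) set) \<ge> 2"
  shows "(\<forall>n\<ge>2. (\<exists>L :: 'a list set. regular L \<and> prefix_closed L \<and> kappa L = n \<and>
                   kappa (kstar L) = 2 ^ (n - 2) + 1) \<and>
               (\<exists>L :: 'a list set. regular L \<and> subword_closed L \<and> kappa L = n \<and>
                   kappa (kstar L) = 2)) \<and>
       (\<forall>n\<ge>3. (\<exists>L :: 'a list set. regular L \<and> suffix_closed L \<and> kappa L = n \<and>
                   L = kstar L \<and> kappa (kstar L) = n) \<and>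
               (\<exists>L :: 'a list set. regular L \<and> suffix_closed L \<and> kappa L = n \<and>
                   L \<noteq> kstar L \<and> kappa (kstar L) = n - 1))"
proof -
  obtain a b :: 'a where ab: "a \<noteq> b" using two_letters[OF assms] by blast
  have F1ab: "F1 a b" unfolding F1_def using ab .
  have ABab: "AB a b" unfolding AB_def using ab .
  interpret AB a b by (rule ABab)
  show ?thesis
  proof (intro conjI allI impI)
    fix n :: nat assume n: "2 \<le> n"
    define m where "m = n - 2"
    have nm: "n = m + 2" unfolding m_def using n by simp
    show "\<exists>L :: 'a list set. regular L \<and> prefix_closed L \<and> kappa L = n \<and> kappa (kstar L) = 2 ^ (n - 2) + 1"
      using F1.LF_regular[OF F1ab, of m] F1.LF_prefix[OF F1ab, of m] F1.LF_kappa[OF F1ab, of m]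
        F1.star_LF_kappa[OF F1ab, of m] nm by auto
  next
    fix n :: nat assume n: "2 \<le> n"
    show "\<exists>L :: 'a list set. regular L \<and> subword_closed L \<and> kappa L = n \<and> kappa (kstar L) = 2"
    proof (cases "n = 2")
      case True
      have "subword_closed (F1.LF 0 a b)" unfolding LF0_eq[OF F1ab] subword_closed_def by auto
      then show ?thesis using F1.LF_regular[OF F1ab, of 0] F1.LF_kappa[OF F1ab, of 0]
        F1.star_LF_kappa[OF F1ab, of 0] True by auto
    next
      case False
      then have k: "1 \<le> n - 2" using n by simp
      show ?thesis using L1_regular[of "n - 2"] L1_subword[of "n - 2"] L1_kappa[of "n - 2"]
        kstar_L1[OF k] Astar_kappa n by auto
    qed
  next
    fix n :: nat assume n: "3 \<le> n"
    have m1: "1 \<le> n - 2" using n by simp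
    have "kstar (K (n - 2)) = K (n - 2)" by (rule K_star)
    then show "\<exists>L :: 'a list set. regular L \<and> suffix_closed L \<and> kappa L = n \<and> L = kstar L \<and> kappa (kstar L) = n"
      using K_regular[OF m1] K_suffix[of "n - 2"] K_kappa[OF m1] n
      by (intro exI[of _ "K (n - 2)"]) simp
  next
    fix n :: nat assume n: "3 \<le> n"
    show "\<exists>L :: 'a list set. regular L \<and> suffix_closed L \<and> kappa L = n \<and> L \<noteq> kstar L \<and> kappa (kstar L) = n - 1"
    proof (cases "n = 3")
      case True
      have sc: "suffix_closed (L1 1)" using L1_subword[of 1]
        unfolding subword_closed_def suffix_closed_def by (meson suffix_imp_subseq)
      have "[a, a] \<in> kstar (L1 1)" using kstar_L1[of 1] unfolding Astar_def by simp
      moreover have "[a, a] \<notin> L1 1" unfolding L1_mem by simp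
      ultimately have ne: "L1 1 \<noteq> kstar (L1 1)" by blast
      show ?thesis using L1_regular[of 1] sc L1_kappa[of 1] ne kstar_L1[of 1] Astar_kappa True
        by (intro exI[of _ "L1 1"]) simp
    next
      case False
      then have m1: "1 \<le> n - 3" using n by simp
      have "kappa (kstar (L3 (n - 3))) = n - 1" using kstar_L3[OF m1] K_kappa[OF m1] n by simp
      moreover have "kappa (L3 (n - 3)) = n" using L3_kappa[of "n - 3"] n False by simp
      ultimately show ?thesis using L3_regular[of "n - 3"] L3_suffix[of "n - 3"] L3_ne[OF m1]
        by (intro exI[of _ "L3 (n - 3)"]) simp
    qed
  qed
qed

theorem theorem4:
  shows
   "(\<forall>L :: ('a::finite) list set. regular L \<longrightarrow>
       ((kappa L = 1 \<and> closed_lang L \<longrightarrow> kappa (kstar L) \<le> 2) \<and>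
        (\<forall>n. kappa L = n \<and> n \<ge> 2 \<longrightarrow>
           (prefix_closed L \<longrightarrow> kappa (kstar L) \<le> 2 ^ (n - 2) + 1) \<and>
           (suffix_closed L \<longrightarrow>
              (L = kstar L \<longrightarrow> kappa (kstar L) \<le> n) \<and>
              (L \<noteq> kstar L \<longrightarrow> kappa (kstar L) \<le> n - 1)) \<and>
           (factor_closed L \<or> subword_closed L \<longrightarrow> kappa (kstar L) \<le> 2))))
    \<and>
    (card (UNIV :: 'a set) \<ge> 2 \<longrightarrow>
       (\<forall>n\<ge>2. (\<exists>L :: 'a list set. regular L \<and> prefix_closed L \<and> kappa L = n \<and>
                   kappa (kstar L) = 2 ^ (n - 2) + 1) \<and>
               (\<exists>L :: 'a list set. regular L \<and> subword_closed L \<and> kappa L = n \<and>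
                   kappa (kstar L) = 2)) \<and>
       (\<forall>n\<ge>3. (\<exists>L :: 'a list set. regular L \<and> suffix_closed L \<and> kappa L = n \<and>
                   L = kstar L \<and> kappa (kstar L) = n) \<and>
               (\<exists>L :: 'a list set. regular L \<and> suffix_closed L \<and> kappa L = n \<and>
                   L \<noteq> kstar L \<and> kappa (kstar L) = n - 1)))"
  apply (rule conjI)
   apply (rule allI, rule impI)
   apply (rule upper_part)
  apply (rule impI)
  apply (erule witness_part)
  done

end
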